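(* Let $k\ge 1$ be an integer and let $\Gamma=\mathbb{Z}_2\,\mathrm{wr}\,\mathbb{Z}^k$ be the restricted wreath product. Then $\Gamma$ has the property $R_\infty$: for every automorphism $\phi:\Gamma\to\Gamma$ the Reidemeister number $R(\phi)$ is infinite.
   Context: For an automorphism $\phi$ of a group $G$, the Reidemeister (twisted conjugacy) classes are the equivalence classes of the relation $g\sim hg\phi(h^{-1})$, $h,g\in G$; $R(\phi)$ denotes the number of these classes. A group has property $R_\infty$ if $R(\phi)=\infty$ for every automorphism $\phi$. The restricted wreath product $\mathbb{Z}_p\,\mathrm{wr}\,\mathbb{Z}^k$ is the semidirect product $\left(\bigoplus_{x\in\mathbb{Z}^k}(\mathbb{Z}_p)_{(x)}\right)\rtimes_\alpha\mathbb{Z}^k$, where each $(\mathbb{Z}_p)_{(x)}\cong\mathbb{Z}_p$ is generated by an element $\delta_x$, the direct sum consists of finitely supported elements, and $\alpha(y)(\delta_x)=\delta_{y+x}$ for $y\in\mathbb{Z}^k$. *)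

theory Defs
  imports "HOL-Algebra.Group"
begin

text \<open>The free abelian group Z^k, realised as integer vectors nat => int vanishing from index k on.\<close>
definition Zk :: "nat \<Rightarrow> (nat \<Rightarrow> int) set" where
  "Zk k = {y. \<forall>i\<ge>k. y i = 0}"

text \<open>Finitely supported functions Z^k -> Z_2 (Z_2 encoded as bool with xor), i.e. the
  direct sum of copies of Z_2 indexed by Z^k; delta_x is the indicator of x.\<close>
definition fin_supp_Z2 :: "nat \<Rightarrow> ((nat \<Rightarrow> int) \<Rightarrow> bool) set" where
  "fin_supp_Z2 k = {f. finite {x. f x} \<and> {x. f x} \<subseteq> Zk k}"

text \<open>Shift action alpha(y): alpha(y)(delta_x) = delta_(y+x), so (alpha(y) f)(x) = f(x - y).\<close>
definition shift_act :: "(nat \<Rightarrow> int) \<Rightarrow> ((nat \<Rightarrow> int) \<Rightarrow> bool) \<Rightarrow> ((nat \<Rightarrow> int) \<Rightarrow> bool)" where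
  "shift_act y f = (\<lambda>x. f (\<lambda>i. x i - y i))"

text \<open>The restricted wreath product Z_2 wr Z^k as the semidirect product
  (direct sum) \<rtimes>_alpha Z^k:  (f,y)(g,z) = (f + alpha(y) g, y + z).\<close>
definition Z2_wr_Zk :: "nat \<Rightarrow> (((nat \<Rightarrow> int) \<Rightarrow> bool) \<times> (nat \<Rightarrow> int)) monoid" where
  "Z2_wr_Zk k = \<lparr> carrier = fin_supp_Z2 k \<times> Zk k,
     mult = (\<lambda>(f, y) (g, z). ((\<lambda>x. f x \<noteq> shift_act y g x), (\<lambda>i. y i + z i))),
     one = ((\<lambda>_. False), (\<lambda>_. 0)) \<rparr>"

definition twisted_conj :: "('a, 'b) monoid_scheme \<Rightarrow> ('a \<Rightarrow> 'a) \<Rightarrow> ('a \<times> 'a) set" where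
  "twisted_conj G \<phi> = {(g, g'). g \<in> carrier G \<and> g' \<in> carrier G \<and>
      (\<exists>h\<in>carrier G. g' = h \<otimes>\<^bsub>G\<^esub> g \<otimes>\<^bsub>G\<^esub> \<phi> (inv\<^bsub>G\<^esub> h))}"

definition reidemeister_classes :: "('a, 'b) monoid_scheme \<Rightarrow> ('a \<Rightarrow> 'a) \<Rightarrow> 'a set set" where
  "reidemeister_classes G \<phi> = carrier G // twisted_conj G \<phi>"

definition R_infinity :: "('a, 'b) monoid_scheme \<Rightarrow> bool" where
  "R_infinity G \<longleftrightarrow> (\<forall>\<phi>\<in>iso G G. infinite (reidemeister_classes G \<phi>))"

end

theory Submission
  imports Defs "HOL-Library.Function_Algebras" "HOL-Library.Fun_Lexorder"
    "HOL-Computational_Algebra.Primes" "HOL-Library.Infinite_Set"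
begin

lemma Zk_iff: "y \<in> Zk k \<longleftrightarrow> (\<forall>i\<ge>k. y i = 0)" by (simp add: Zk_def)

lemma Zk_add[simp]: "x \<in> Zk k \<Longrightarrow> y \<in> Zk k \<Longrightarrow> x + y \<in> Zk k" by (simp add: Zk_iff)
lemma Zk_diff[simp]: "x \<in> Zk k \<Longrightarrow> y \<in> Zk k \<Longrightarrow> x - y \<in> Zk k" by (simp add: Zk_iff)
lemma Zk_uminus[simp]: "x \<in> Zk k \<Longrightarrow> - x \<in> Zk k" by (simp add: Zk_iff)
lemma Zk_zero[simp]: "0 \<in> Zk k" by (simp add: Zk_iff)

lemma fs_iff: "f \<in> fin_supp_Z2 k \<longleftrightarrow> finite {x. f x} \<and> {x. f x} \<subseteq> Zk k"
  by (simp add: fin_supp_Z2_def)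

lemma G_carrier: "carrier (Z2_wr_Zk k) = fin_supp_Z2 k \<times> Zk k"
  by (simp add: Z2_wr_Zk_def)

lemma shift_eq: "shift_act y f = (\<lambda>x. f (x - y))" by (simp only: shift_act_def fun_diff_def)
lemma lam_add: "(\<lambda>i. (y::nat\<Rightarrow>int) i + z i) = y + z" by (simp only: plus_fun_def)

lemma G_mult: "(f,y) \<otimes>\<^bsub>Z2_wr_Zk k\<^esub> (g,z) = ((\<lambda>x. f x \<noteq> g (x - y)), y + z)"
  by (simp add: Z2_wr_Zk_def shift_eq lam_add)

lemma G_one: "\<one>\<^bsub>Z2_wr_Zk k\<^esub> = ((\<lambda>_. False), 0)"
  by (simp add: Z2_wr_Zk_def zero_fun_def)

lemma fs_mult:
  assumes "f \<in> fin_supp_Z2 k" "g \<in> fin_supp_Z2 k" "y \<in> Zk k"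
  shows "(\<lambda>x. f x \<noteq> g (x - y)) \<in> fin_supp_Z2 k"
proof -
  have sub: "{x. f x \<noteq> g (x - y)} \<subseteq> {x. f x} \<union> (\<lambda>x. x + y) ` {x. g x}"
    by (auto simp: image_iff) (metis diff_add_cancel)
  have "finite ((\<lambda>x. x + y) ` {x. g x})" using assms by (simp add: fs_iff)
  then have "finite {x. f x \<noteq> g (x - y)}" using assms sub
    by (meson finite_Un finite_subset fs_iff)
  moreover have "(\<lambda>x. x + y) ` {x. g x} \<subseteq> Zk k" using assms by (auto simp: fs_iff)
  then have "{x. f x \<noteq> g (x - y)} \<subseteq> Zk k" using sub assms by (auto simp: fs_iff)
  ultimately show ?thesis by (simp add: fs_iff)
qed

lemma fs_shift:
  assumes "f \<in> fin_supp_Z2 k" "y \<in> Zk k"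
  shows "(\<lambda>x. f (x + y)) \<in> fin_supp_Z2 k"
proof -
  have sub: "{x. f (x + y)} = (\<lambda>x. x - y) ` {x. f x}"
    by (auto simp: image_iff intro!: exI[of _ "_ + y"])
  show ?thesis using assms unfolding fs_iff sub by auto
qed

lemma fs_zero[simp]: "(\<lambda>_. False) \<in> fin_supp_Z2 k" by (simp add: fs_iff)

lemma G_group: "group (Z2_wr_Zk k)"
proof (rule groupI)
  fix x y assume "x \<in> carrier (Z2_wr_Zk k)" "y \<in> carrier (Z2_wr_Zk k)"
  then show "x \<otimes>\<^bsub>Z2_wr_Zk k\<^esub> y \<in> carrier (Z2_wr_Zk k)"
  proof -
    obtain f a g b where "x = (f,a)" "y = (g,b)" by (cases x, cases y)
    then show ?thesis using \<open>x \<in> _\<close> \<open>y \<in> _\<close> fs_mult[of f k g a] by (auto simp: G_carrier G_mult)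
  qed
next
  show "\<one>\<^bsub>Z2_wr_Zk k\<^esub> \<in> carrier (Z2_wr_Zk k)" by (simp add: G_one G_carrier)
next
  fix x y z assume "x \<in> carrier (Z2_wr_Zk k)" "y \<in> carrier (Z2_wr_Zk k)" "z \<in> carrier (Z2_wr_Zk k)"
  then show "x \<otimes>\<^bsub>Z2_wr_Zk k\<^esub> y \<otimes>\<^bsub>Z2_wr_Zk k\<^esub> z = x \<otimes>\<^bsub>Z2_wr_Zk k\<^esub> (y \<otimes>\<^bsub>Z2_wr_Zk k\<^esub> z)"
    by (cases x, cases y, cases z) (auto simp: G_mult fun_eq_iff algebra_simps)
next
  fix x assume "x \<in> carrier (Z2_wr_Zk k)"
  then show "\<one>\<^bsub>Z2_wr_Zk k\<^esub> \<otimes>\<^bsub>Z2_wr_Zk k\<^esub> x = x"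
    by (cases x) (simp add: G_one G_mult)
next
  fix x assume x: "x \<in> carrier (Z2_wr_Zk k)"
  obtain f y where xe: "x = (f, y)" by (cases x)
  have "((\<lambda>z. f (z + y)), - y) \<in> carrier (Z2_wr_Zk k)"
    using x xe by (auto simp: G_carrier intro: fs_shift)
  moreover have "((\<lambda>z. f (z + y)), - y) \<otimes>\<^bsub>Z2_wr_Zk k\<^esub> x = \<one>\<^bsub>Z2_wr_Zk k\<^esub>"
    by (simp add: xe G_mult G_one fun_eq_iff)
  ultimately show "\<exists>y\<in>carrier (Z2_wr_Zk k). y \<otimes>\<^bsub>Z2_wr_Zk k\<^esub> x = \<one>\<^bsub>Z2_wr_Zk k\<^esub>" by blast
qed

lemma G_inv:
  assumes "(f, y) \<in> carrier (Z2_wr_Zk k)"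
  shows "inv\<^bsub>Z2_wr_Zk k\<^esub> (f, y) = ((\<lambda>z. f (z + y)), - y)"
proof -
  interpret group "Z2_wr_Zk k" by (rule G_group)
  have c: "((\<lambda>z. f (z + y)), - y) \<in> carrier (Z2_wr_Zk k)"
    using assms by (auto simp: G_carrier intro: fs_shift)
  have "((\<lambda>z. f (z + y)), - y) \<otimes>\<^bsub>Z2_wr_Zk k\<^esub> (f, y) = \<one>\<^bsub>Z2_wr_Zk k\<^esub>"
    by (simp add: G_mult G_one fun_eq_iff)
  then show ?thesis using inv_equality[OF _ assms c] by simp
qed


lemma card_le_quot:
  assumes eq: "equiv A r" and S: "S \<subseteq> A" and pw: "\<forall>a\<in>S. \<forall>b\<in>S. (a,b)\<in>r \<longrightarrow> a = b"
    and fin: "finite (A // r)"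
  shows "finite S \<and> card S \<le> card (A // r)"
proof -
  have inj: "inj_on (\<lambda>a. r``{a}) S"
  proof (rule inj_onI)
    fix a b assume "a \<in> S" "b \<in> S" "r``{a} = r``{b}"
    then have "(a,b) \<in> r" using eq_equiv_class_iff[OF eq] S by blast
    then show "a = b" using pw \<open>a \<in> S\<close> \<open>b \<in> S\<close> by blast
  qed
  have sub: "(\<lambda>a. r``{a}) ` S \<subseteq> A // r" using S by (auto intro: quotientI)
  then have "finite ((\<lambda>a. r``{a}) ` S)" using fin finite_subset by blast
  then have "finite S" using inj finite_imageD by blast
  moreover have "card S \<le> card (A // r)" using card_inj_on_le[OF inj sub fin] .
  ultimately show ?thesis by blast
qed

lemma card_img_le_quot:
  assumes eq: "equiv A r" and inv: "\<And>a b. (a,b) \<in> r \<Longrightarrow> F a = F b"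
    and fin: "finite (A // r)"
  shows "finite (F ` A) \<and> card (F ` A) \<le> card (A // r)"
proof -
  have "F ` A = (\<lambda>X. F (SOME x. x \<in> X)) ` (A // r)"
  proof (intro equalityI subsetI)
    fix z assume "z \<in> F ` A"
    then obtain a where a: "a \<in> A" "z = F a" by blast
    have "a \<in> r``{a}" using eq a by (meson equiv_class_self)
    then have s: "(SOME x. x \<in> r``{a}) \<in> r``{a}" by (rule someI)
    then have "F (SOME x. x \<in> r``{a}) = F a" using inv by (metis Image_singleton_iff)
    moreover have "r``{a} \<in> A // r" using a(1) by (rule quotientI)
    ultimately show "z \<in> (\<lambda>X. F (SOME x. x \<in> X)) ` (A // r)" using a by force
  next
    fix z assume "z \<in> (\<lambda>X. F (SOME x. x \<in> X)) ` (A // r)"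
    then obtain X where X: "X \<in> A // r" "z = F (SOME x. x \<in> X)" by blast
    then obtain a where a: "a \<in> A" "X = r``{a}" by (auto elim: quotientE)
    have "a \<in> X" using eq a by (meson equiv_class_self)
    then have s: "(SOME x. x \<in> X) \<in> X" by (rule someI)
    then have "(SOME x. x \<in> X) \<in> A" using a X eq in_quotient_imp_subset by blast
    then show "z \<in> F ` A" using X by blast
  qed
  then show ?thesis using fin card_image_le by auto
qed

locale wr_aut =
  fixes k :: nat and \<phi>
  assumes iso: "\<phi> \<in> iso (Z2_wr_Zk k) (Z2_wr_Zk k)"
begin

abbreviation "G \<equiv> Z2_wr_Zk k"

lemma grp: "group G" by (rule G_group)

lemma ghom: "group_hom G G \<phi>"
  using iso grp by (simp add: group_hom_def group_hom_axioms_def iso_def)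

lemma phi_mult: "x \<in> carrier G \<Longrightarrow> y \<in> carrier G \<Longrightarrow> \<phi> (x \<otimes>\<^bsub>G\<^esub> y) = \<phi> x \<otimes>\<^bsub>G\<^esub> \<phi> y"
  using group_hom.hom_mult[OF ghom] by blast

lemma phi_carrier: "x \<in> carrier G \<Longrightarrow> \<phi> x \<in> carrier G"
  using group_hom.hom_closed[OF ghom] by blast

lemma phi_one: "\<phi> \<one>\<^bsub>G\<^esub> = \<one>\<^bsub>G\<^esub>"
  using group_hom.hom_one[OF ghom] by blast

lemma phi_inv: "x \<in> carrier G \<Longrightarrow> \<phi> (inv\<^bsub>G\<^esub> x) = inv\<^bsub>G\<^esub> (\<phi> x)"
  using group_hom.hom_inv[OF ghom] by blast

lemma phi_bij: "bij_betw \<phi> (carrier G) (carrier G)"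
  using iso by (simp add: iso_def)

lemma phi_inj: "x \<in> carrier G \<Longrightarrow> y \<in> carrier G \<Longrightarrow> \<phi> x = \<phi> y \<Longrightarrow> x = y"
  using phi_bij by (meson bij_betw_def inj_onD)

lemma phi_surj: "y \<in> carrier G \<Longrightarrow> \<exists>x\<in>carrier G. \<phi> x = y"
  using phi_bij by (metis bij_betw_def imageE)

lemma tc_equiv: "equiv (carrier G) (twisted_conj G \<phi>)"
proof -
  interpret group G by (rule grp)
  have sub: "twisted_conj G \<phi> \<subseteq> carrier G \<times> carrier G" by (auto simp: twisted_conj_def)
  have refl: "refl_on (carrier G) (twisted_conj G \<phi>)"
  proof (rule refl_onI)
    fix x assume x: "x \<in> carrier G"
    have "x = \<one>\<^bsub>G\<^esub> \<otimes>\<^bsub>G\<^esub> x \<otimes>\<^bsub>G\<^esub> \<phi> (inv\<^bsub>G\<^esub> \<one>\<^bsub>G\<^esub>)" using x by (simp add: phi_one)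
    then show "(x, x) \<in> twisted_conj G \<phi>" using x unfolding twisted_conj_def
      by (intro CollectI case_prodI conjI bexI[of _ "\<one>\<^bsub>G\<^esub>"]) auto
  qed
  have sym: "sym (twisted_conj G \<phi>)"
  proof (rule symI)
    fix a b assume "(a, b) \<in> twisted_conj G \<phi>"
    then obtain h where a: "a \<in> carrier G" and b: "b \<in> carrier G" and h: "h \<in> carrier G"
      and e: "b = h \<otimes>\<^bsub>G\<^esub> a \<otimes>\<^bsub>G\<^esub> \<phi> (inv\<^bsub>G\<^esub> h)" unfolding twisted_conj_def by blast
    have ph: "\<phi> h \<in> carrier G" "\<phi> (inv\<^bsub>G\<^esub> h) \<in> carrier G" using h phi_carrier by auto
    have "inv\<^bsub>G\<^esub> h \<otimes>\<^bsub>G\<^esub> b \<otimes>\<^bsub>G\<^esub> \<phi> (inv\<^bsub>G\<^esub> (inv\<^bsub>G\<^esub> h))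
        = inv\<^bsub>G\<^esub> h \<otimes>\<^bsub>G\<^esub> (h \<otimes>\<^bsub>G\<^esub> a \<otimes>\<^bsub>G\<^esub> \<phi> (inv\<^bsub>G\<^esub> h)) \<otimes>\<^bsub>G\<^esub> \<phi> h"
      using e h by simp
    also have "\<dots> = (inv\<^bsub>G\<^esub> h \<otimes>\<^bsub>G\<^esub> h) \<otimes>\<^bsub>G\<^esub> a \<otimes>\<^bsub>G\<^esub> (\<phi> (inv\<^bsub>G\<^esub> h) \<otimes>\<^bsub>G\<^esub> \<phi> h)"
      using h a ph by (simp add: m_assoc) (simp add: m_assoc[symmetric])
    also have "\<dots> = a \<otimes>\<^bsub>G\<^esub> \<phi> (inv\<^bsub>G\<^esub> h \<otimes>\<^bsub>G\<^esub> h)" using h a by (subst phi_mult) auto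
    also have "\<dots> = a" using h a by (simp add: phi_one)
    finally show "(b, a) \<in> twisted_conj G \<phi>" unfolding twisted_conj_def
      using a b h by (intro CollectI case_prodI conjI bexI[of _ "inv\<^bsub>G\<^esub> h"]) auto
  qed
  have trans: "trans (twisted_conj G \<phi>)"
  proof (rule transI)
    fix a b c assume "(a, b) \<in> twisted_conj G \<phi>" "(b, c) \<in> twisted_conj G \<phi>"
    then obtain h1 h2 where a: "a \<in> carrier G" and c: "c \<in> carrier G" and h: "h1 \<in> carrier G" "h2 \<in> carrier G"
      and e: "b = h1 \<otimes>\<^bsub>G\<^esub> a \<otimes>\<^bsub>G\<^esub> \<phi> (inv\<^bsub>G\<^esub> h1)" "c = h2 \<otimes>\<^bsub>G\<^esub> b \<otimes>\<^bsub>G\<^esub> \<phi> (inv\<^bsub>G\<^esub> h2)"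
      unfolding twisted_conj_def by blast
    have ph: "\<phi> (inv\<^bsub>G\<^esub> h1) \<in> carrier G" "\<phi> (inv\<^bsub>G\<^esub> h2) \<in> carrier G" using h phi_carrier by auto
    have "c = (h2 \<otimes>\<^bsub>G\<^esub> h1) \<otimes>\<^bsub>G\<^esub> a \<otimes>\<^bsub>G\<^esub> (\<phi> (inv\<^bsub>G\<^esub> h1) \<otimes>\<^bsub>G\<^esub> \<phi> (inv\<^bsub>G\<^esub> h2))"
      using e h a ph by (simp add: m_assoc)
    also have "\<dots> = (h2 \<otimes>\<^bsub>G\<^esub> h1) \<otimes>\<^bsub>G\<^esub> a \<otimes>\<^bsub>G\<^esub> \<phi> (inv\<^bsub>G\<^esub> (h2 \<otimes>\<^bsub>G\<^esub> h1))"
      using h by (simp add: phi_mult inv_mult_group)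
    finally show "(a, c) \<in> twisted_conj G \<phi>" unfolding twisted_conj_def
      using a c h by (intro CollectI case_prodI conjI bexI[of _ "h2 \<otimes>\<^bsub>G\<^esub> h1"]) auto
  qed
  show ?thesis using sub refl sym trans by (rule equivI)
qed

end

definition smul :: "int \<Rightarrow> (nat \<Rightarrow> int) \<Rightarrow> (nat \<Rightarrow> int)" where
  "smul n x = (\<lambda>i. n * x i)"

lemma Zk_smul[simp]: "x \<in> Zk k \<Longrightarrow> smul n x \<in> Zk k" by (simp add: Zk_iff smul_def)

lemma delta_fs[simp]: "y \<in> Zk k \<Longrightarrow> (\<lambda>x. x = y) \<in> fin_supp_Z2 k" by (simp add: fs_iff)

context wr_aut
begin

lemma sq_one: assumes "g \<in> carrier G" shows "g \<otimes>\<^bsub>G\<^esub> g = \<one>\<^bsub>G\<^esub> \<longleftrightarrow> snd g = 0"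
proof -
  obtain f y where g: "g = (f, y)" by (cases g)
  show ?thesis
  proof
    assume "g \<otimes>\<^bsub>G\<^esub> g = \<one>\<^bsub>G\<^esub>"
    then have "y + y = 0" by (simp add: g G_mult G_one)
    then have "\<forall>i. y i + y i = 0" by (metis plus_fun_apply zero_fun_apply)
    then have "y = 0" by (simp add: fun_eq_iff)
    then show "snd g = 0" by (simp add: g)
  next
    assume "snd g = 0"
    then show "g \<otimes>\<^bsub>G\<^esub> g = \<one>\<^bsub>G\<^esub>" by (simp add: g G_mult G_one)
  qed
qed

lemma phi_B: assumes g: "g \<in> carrier G" shows "snd (\<phi> g) = 0 \<longleftrightarrow> snd g = 0"
proof
  assume "snd (\<phi> g) = 0"
  then have "\<phi> g \<otimes>\<^bsub>G\<^esub> \<phi> g = \<one>\<^bsub>G\<^esub>" using sq_one phi_carrier g by blast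
  then have "\<phi> (g \<otimes>\<^bsub>G\<^esub> g) = \<phi> \<one>\<^bsub>G\<^esub>" using g by (simp add: phi_mult phi_one)
  then have "g \<otimes>\<^bsub>G\<^esub> g = \<one>\<^bsub>G\<^esub>"
    using phi_inj g group.subgroup_self[OF grp] by (meson group.is_monoid grp monoid.m_closed monoid.one_closed)
  then show "snd g = 0" using sq_one g by blast
next
  assume "snd g = 0"
  then have "g \<otimes>\<^bsub>G\<^esub> g = \<one>\<^bsub>G\<^esub>" using sq_one g by blast
  then have "\<phi> g \<otimes>\<^bsub>G\<^esub> \<phi> g = \<one>\<^bsub>G\<^esub>" using g by (simp add: phi_mult[symmetric] phi_one)
  then show "snd (\<phi> g) = 0" using sq_one phi_carrier g by blast
qed

definition lin :: "(nat \<Rightarrow> int) \<Rightarrow> (nat \<Rightarrow> int)" where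
  "lin y = snd (\<phi> ((\<lambda>_. False), y))"

lemma zc: "y \<in> Zk k \<Longrightarrow> ((\<lambda>_. False), y) \<in> carrier G" by (simp add: G_carrier)
lemma fc: "f \<in> fin_supp_Z2 k \<Longrightarrow> (f, 0) \<in> carrier G" by (simp add: G_carrier)

lemma split_el: "(f, y) = (f, 0) \<otimes>\<^bsub>G\<^esub> ((\<lambda>_. False), y)"
  by (simp add: G_mult)

lemma phi_f0: assumes "f \<in> fin_supp_Z2 k" shows "\<phi> (f, 0) = (fst (\<phi> (f, 0)), 0)"
  using phi_B[OF fc[OF assms]] by (metis prod.collapse snd_conv)

lemma lin_eq: assumes "y \<in> Zk k" shows "\<phi> ((\<lambda>_. False), y) = (fst (\<phi> ((\<lambda>_. False), y)), lin y)"
  by (simp add: lin_def)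

lemma snd_phi: assumes "(f, y) \<in> carrier G" shows "snd (\<phi> (f, y)) = lin y"
proof -
  have f: "f \<in> fin_supp_Z2 k" and y: "y \<in> Zk k" using assms by (auto simp: G_carrier)
  have "\<phi> (f, y) = \<phi> (f, 0) \<otimes>\<^bsub>G\<^esub> \<phi> ((\<lambda>_. False), y)"
    using split_el phi_mult fc[OF f] zc[OF y] by metis
  also have "\<dots> = (fst (\<phi> (f, 0)), 0) \<otimes>\<^bsub>G\<^esub> (fst (\<phi> ((\<lambda>_. False), y)), lin y)"
    using phi_f0[OF f] lin_eq[OF y] by simp
  finally show ?thesis by (simp add: G_mult)
qed

lemma lin_Zk: "y \<in> Zk k \<Longrightarrow> lin y \<in> Zk k"
  using phi_carrier[OF zc] by (auto simp: lin_def G_carrier mem_Times_iff)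

lemma lin_add: assumes y: "y \<in> Zk k" and z: "z \<in> Zk k" shows "lin (y + z) = lin y + lin z"
proof -
  have e: "((\<lambda>_. False), y + z) = ((\<lambda>_. False), y) \<otimes>\<^bsub>G\<^esub> ((\<lambda>_. False), z)" by (simp add: G_mult)
  have "\<phi> ((\<lambda>_. False), y + z) = \<phi> ((\<lambda>_. False), y) \<otimes>\<^bsub>G\<^esub> \<phi> ((\<lambda>_. False), z)"
    unfolding e by (rule phi_mult[OF zc[OF y] zc[OF z]])
  also have "\<dots> = (fst (\<phi> ((\<lambda>_. False), y)), lin y) \<otimes>\<^bsub>G\<^esub> (fst (\<phi> ((\<lambda>_. False), z)), lin z)"
    using lin_eq y z by simp
  finally have "snd (\<phi> ((\<lambda>_. False), y + z)) = lin y + lin z" by (simp add: G_mult)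
  then show ?thesis by (simp only: lin_def[of "y + z"])
qed

lemma lin_0: "lin 0 = 0"
proof -
  have "lin (0 + 0) = lin 0 + lin 0" by (rule lin_add) auto
  then show ?thesis by (simp only: add_0 add_cancel_right_right)
qed

lemma lin_uminus: "y \<in> Zk k \<Longrightarrow> lin (- y) = - lin y"
  using lin_add[of y "- y"] lin_0 by (simp add: eq_neg_iff_add_eq_0 add.commute)

lemma lin_diff: "y \<in> Zk k \<Longrightarrow> z \<in> Zk k \<Longrightarrow> lin (y - z) = lin y - lin z"
  using lin_add[of y "- z"] lin_uminus[of z] by simp

lemma lin_surj: "w \<in> Zk k \<Longrightarrow> \<exists>y\<in>Zk k. lin y = w"
proof -
  assume w: "w \<in> Zk k"
  obtain x where x: "x \<in> carrier G" "\<phi> x = ((\<lambda>_. False), w)" using phi_surj zc[OF w] by blast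
  obtain f y where "x = (f, y)" by (cases x)
  then show ?thesis using x snd_phi by (force simp: G_carrier)
qed

lemma lin_inj: assumes y: "y \<in> Zk k" and z: "z \<in> Zk k" and e: "lin y = lin z" shows "y = z"
proof -
  have "lin (y - z) = 0" using lin_diff[OF y z] e by simp
  then have "snd (\<phi> ((\<lambda>_. False), y - z)) = 0" by (simp add: lin_def)
  then have "y - z = 0" using phi_B[OF zc[of "y - z"]] y z by simp
  then show ?thesis by simp
qed

lemma lin_smul_nat: "y \<in> Zk k \<Longrightarrow> lin (smul (int n) y) = smul (int n) (lin y)"
proof (induction n)
  case 0
  then show ?case using lin_0 by (simp add: smul_def zero_fun_def)
next
  case (Suc n)
  have e: "smul (1 + int n) y = smul (int n) y + y" for y by (simp add: smul_def fun_eq_iff algebra_simps)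
  have "lin (smul (1 + int n) y) = lin (smul (int n) y + y)" by (simp only: e)
  also have "\<dots> = lin (smul (int n) y) + lin y" using Suc.prems by (intro lin_add) auto
  also have "\<dots> = smul (int n) (lin y) + lin y" using Suc by simp
  also have "\<dots> = smul (1 + int n) (lin y)" by (simp only: e)
  finally show ?case by simp
qed

lemma lin_smul: assumes "y \<in> Zk k" shows "lin (smul n y) = smul n (lin y)"
proof (cases "n \<ge> 0")
  case True
  then have "n = int (nat n)" by simp
  then show ?thesis using lin_smul_nat[OF assms, of "nat n"] by metis
next
  case False
  define n' where "n' = nat (- n)"
  have n: "n = - int n'" using False by (simp add: n'_def)
  have e: "smul (- int n') x = - smul (int n') x" for x by (simp add: smul_def fun_eq_iff)
  show ?thesis using lin_smul_nat[OF assms] lin_uminus assms by (simp add: n e)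
qed

definition Phi :: "((nat \<Rightarrow> int) \<Rightarrow> bool) \<Rightarrow> ((nat \<Rightarrow> int) \<Rightarrow> bool)" where
  "Phi f = fst (\<phi> (f, 0))"

lemma phi_B_eq: assumes "f \<in> fin_supp_Z2 k" shows "\<phi> (f, 0) = (Phi f, 0)" "Phi f \<in> fin_supp_Z2 k"
proof -
  show "\<phi> (f, 0) = (Phi f, 0)" unfolding Phi_def by (rule phi_f0[OF assms])
  then show "Phi f \<in> fin_supp_Z2 k" using phi_carrier[OF fc[OF assms]] by (simp add: G_carrier)
qed

lemma xor_fs: "f \<in> fin_supp_Z2 k \<Longrightarrow> g \<in> fin_supp_Z2 k \<Longrightarrow> (\<lambda>x. f x \<noteq> g x) \<in> fin_supp_Z2 k"
  using fs_mult[of f k g 0] by simp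

lemma Phi_xor: assumes f: "f \<in> fin_supp_Z2 k" and g: "g \<in> fin_supp_Z2 k"
  shows "Phi (\<lambda>x. f x \<noteq> g x) = (\<lambda>x. Phi f x \<noteq> Phi g x)"
proof -
  have e: "((\<lambda>x. f x \<noteq> g x), 0) = (f, 0) \<otimes>\<^bsub>G\<^esub> (g, 0)" by (simp add: G_mult)
  have "\<phi> ((\<lambda>x. f x \<noteq> g x), 0) = \<phi> (f, 0) \<otimes>\<^bsub>G\<^esub> \<phi> (g, 0)" unfolding e by (rule phi_mult[OF fc[OF f] fc[OF g]])
  moreover have "(\<lambda>x. f x \<noteq> g x) \<in> fin_supp_Z2 k" using xor_fs[OF f g] .
  ultimately show ?thesis using phi_B_eq(1)[OF f] phi_B_eq(1)[OF g] by (simp add: G_mult phi_B_eq(1))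
qed

definition u0 where "u0 = Phi (\<lambda>x. x = 0)"

lemma Phi_delta: assumes y: "y \<in> Zk k" shows "Phi (\<lambda>x. x = y) = (\<lambda>x. u0 (x - lin y))"
proof -
  interpret group G by (rule grp)
  have c1: "((\<lambda>_. False), y) \<in> carrier G" using zc[OF y] .
  have c2: "((\<lambda>x. x = 0), 0) \<in> carrier G" using fc[of "\<lambda>x. x = 0"] by simp
  have e: "((\<lambda>x. x = y), 0) = ((\<lambda>_. False), y) \<otimes>\<^bsub>G\<^esub> ((\<lambda>x. x = 0), 0) \<otimes>\<^bsub>G\<^esub> inv\<^bsub>G\<^esub> ((\<lambda>_. False), y)"
    using c1 by (simp add: G_inv G_mult)
  have "\<phi> ((\<lambda>x. x = y), 0) = \<phi> ((\<lambda>_. False), y) \<otimes>\<^bsub>G\<^esub> \<phi> ((\<lambda>x. x = 0), 0) \<otimes>\<^bsub>G\<^esub> inv\<^bsub>G\<^esub> (\<phi> ((\<lambda>_. False), y))"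
    unfolding e using c1 c2 by (simp add: phi_mult phi_inv)
  obtain a where a: "\<phi> ((\<lambda>_. False), y) = (a, lin y)" using lin_eq[OF y] by blast
  have ac: "(a, lin y) \<in> carrier G" using phi_carrier[OF c1] a by simp
  have "\<phi> ((\<lambda>x. x = 0), 0) = (u0, 0)" using phi_B_eq(1)[of "\<lambda>x. x = 0"] by (simp add: u0_def)
  then have "\<phi> ((\<lambda>_. False), y) \<otimes>\<^bsub>G\<^esub> \<phi> ((\<lambda>x. x = 0), 0) \<otimes>\<^bsub>G\<^esub> inv\<^bsub>G\<^esub> (\<phi> ((\<lambda>_. False), y))
     = (a, lin y) \<otimes>\<^bsub>G\<^esub> (u0, 0) \<otimes>\<^bsub>G\<^esub> inv\<^bsub>G\<^esub> (a, lin y)"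
    by (simp add: a)
  also have "\<dots> = ((\<lambda>x. u0 (x - lin y)), 0)"
    using ac by (simp add: G_inv G_mult fun_eq_iff) blast
  finally show ?thesis using phi_B_eq(1)[OF delta_fs[OF y]] \<open>\<phi> ((\<lambda>x. x = y), 0) = _\<close> by simp
qed

end

lemma lt_trich: assumes "x \<in> Zk k" "y \<in> Zk k"
  shows "less_fun x y \<or> x = y \<or> less_fun y x"
proof (rule less_fun_trichotomy)
  have "{i. x i \<noteq> y i} \<subseteq> {..<k}" using assms by (auto simp: Zk_iff) (metis not_less)
  then show "finite {i. x i \<noteq> y i}" using finite_subset by blast
qed

lemma lt_add: "less_fun x y \<Longrightarrow> less_fun (x + z) (y + (z :: nat \<Rightarrow> int))"
  unfolding less_fun_def by auto

lemma lt_add2: assumes "less_fun x y" "less_fun z w \<or> z = w"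
  shows "less_fun (x + z) (y + (w :: nat \<Rightarrow> int))"
proof -
  have 1: "less_fun (x + z) (y + z)" using lt_add[OF assms(1)] .
  show ?thesis using assms(2)
  proof
    assume "less_fun z w"
    then have "less_fun (z + y) (w + y)" by (rule lt_add)
    then have "less_fun (y + z) (y + w)" by (simp add: add.commute)
    then show ?thesis using 1 less_fun_trans by blast
  next
    assume "z = w" then show ?thesis using 1 by simp
  qed
qed

lemma lex_max: assumes "finite S" "S \<noteq> {}" "S \<subseteq> Zk k"
  shows "\<exists>a\<in>S. \<forall>s\<in>S. s \<noteq> a \<longrightarrow> less_fun s a"
  using assms
proof (induction S rule: finite_ne_induct)
  case (singleton x)
  then show ?case by simp
next
  case (insert x F)
  then obtain a where a: "a \<in> F" "\<forall>s\<in>F. s \<noteq> a \<longrightarrow> less_fun s a" by auto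
  have xa: "x \<noteq> a" using insert a by blast
  have "less_fun x a \<or> less_fun a x" using lt_trich[of x k a] insert a xa by auto
  then show ?case
  proof
    assume "less_fun x a" then show ?thesis using a by auto
  next
    assume xa2: "less_fun a x"
    have "\<forall>s\<in>insert x F. s \<noteq> x \<longrightarrow> less_fun s x"
      using a xa2 less_fun_trans by (metis insert_iff)
    then show ?thesis by blast
  qed
qed

lemma max_sum:
  fixes U W :: "(nat \<Rightarrow> int) set"
  assumes fin: "finite U" "finite W" and sub: "U \<subseteq> Zk k" "W \<subseteq> Zk k"
    and cond: "\<And>x. odd (card {w\<in>W. x - w \<in> U}) \<longleftrightarrow> x = 0"
    and a: "a \<in> U" "\<forall>s\<in>U. s \<noteq> a \<longrightarrow> less_fun s a"
    and b: "b \<in> W" "\<forall>s\<in>W. s \<noteq> b \<longrightarrow> less_fun s b"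
  shows "a + b = 0"
proof -
  have "{w\<in>W. a + b - w \<in> U} = {b}"
  proof (intro equalityI subsetI)
    fix w assume w: "w \<in> {w\<in>W. a + b - w \<in> U}"
    show "w \<in> {b}"
    proof (rule ccontr)
      assume "w \<notin> {b}"
      then have "less_fun w b" using b w by auto
      then have "less_fun (w + (a - w)) (b + (a - w))" by (rule lt_add)
      then have l: "less_fun a (a + b - w)" by (simp add: algebra_simps)
      have "a + b - w \<in> U" using w by simp
      then have "a + b - w = a \<or> less_fun (a + b - w) a" using a by blast
      then show False using l less_fun_irrefl less_fun_asym by metis
    qed
  next
    fix w assume "w \<in> {b}"
    then show "w \<in> {w\<in>W. a + b - w \<in> U}" using a b by simp
  qed
  then have "odd (card {w\<in>W. (a + b) - w \<in> U})" by simp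
  then show ?thesis using cond by blast
qed

lemma conv_unit:
  fixes U W :: "(nat \<Rightarrow> int) set"
  assumes fin: "finite U" "finite W" and sub: "U \<subseteq> Zk k" "W \<subseteq> Zk k"
    and cond: "\<And>x. odd (card {w\<in>W. x - w \<in> U}) \<longleftrightarrow> x = 0"
  shows "\<exists>c. U = {c}"
proof -
  have Une: "U \<noteq> {}" using cond[of 0] by auto
  have Wne: "W \<noteq> {}" using cond[of 0] by auto
  obtain a1 where a1: "a1 \<in> U" "\<forall>s\<in>U. s \<noteq> a1 \<longrightarrow> less_fun s a1" using lex_max[OF fin(1) Une sub(1)] by blast
  obtain b1 where b1: "b1 \<in> W" "\<forall>s\<in>W. s \<noteq> b1 \<longrightarrow> less_fun s b1" using lex_max[OF fin(2) Wne sub(2)] by blast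
  have s1: "a1 + b1 = 0" using max_sum[OF fin sub cond a1 b1] .
  define U' where "U' = uminus ` U"
  define W' where "W' = uminus ` W"
  have fin': "finite U'" "finite W'" using fin by (auto simp: U'_def W'_def)
  have sub': "U' \<subseteq> Zk k" "W' \<subseteq> Zk k" using sub by (auto simp: U'_def W'_def)
  have cond': "odd (card {w\<in>W'. x - w \<in> U'}) \<longleftrightarrow> x = 0" for x
  proof -
    have "{w\<in>W'. x - w \<in> U'} = uminus ` {w\<in>W. (- x) - w \<in> U}"
    proof (intro equalityI subsetI)
      fix w assume "w \<in> {w\<in>W'. x - w \<in> U'}"
      then obtain w0 u0 where "w0 \<in> W" "w = - w0" "u0 \<in> U" "x - w = - u0" by (auto simp: U'_def W'_def)
      then show "w \<in> uminus ` {w\<in>W. (- x) - w \<in> U}"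
        by (auto simp: image_iff intro!: bexI[of _ w0]) (metis add.inverse_inverse diff_minus_eq_add minus_diff_eq add.commute)
    next
      fix w assume "w \<in> uminus ` {w\<in>W. (- x) - w \<in> U}"
      then obtain w0 where "w0 \<in> W" "w = - w0" "(- x) - w0 \<in> U" by auto
      moreover have "x - w = - ((- x) - w0)" using \<open>w = - w0\<close> by (simp add: algebra_simps)
      ultimately show "w \<in> {w\<in>W'. x - w \<in> U'}" unfolding U'_def W'_def by blast
    qed
    then have "card {w\<in>W'. x - w \<in> U'} = card {w\<in>W. (- x) - w \<in> U}"
      by (simp add: card_image inj_on_def)
    then show ?thesis using cond[of "- x"] by simp
  qed
  have U'ne: "U' \<noteq> {}" "W' \<noteq> {}" using Une Wne by (auto simp: U'_def W'_def)
  obtain a2 where a2: "a2 \<in> U'" "\<forall>s\<in>U'. s \<noteq> a2 \<longrightarrow> less_fun s a2" using lex_max[OF fin'(1) U'ne(1) sub'(1)] by blast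
  obtain b2 where b2: "b2 \<in> W'" "\<forall>s\<in>W'. s \<noteq> b2 \<longrightarrow> less_fun s b2" using lex_max[OF fin'(2) U'ne(2) sub'(2)] by blast
  have s2: "a2 + b2 = 0" using max_sum[OF fin' sub' cond' a2 b2] .
  have "U = {a1}"
  proof (rule ccontr)
    assume "U \<noteq> {a1}"
    then obtain c where c: "c \<in> U" "c \<noteq> a1" using a1 by blast
    then have "less_fun c a1" using a1 by blast
    then have "less_fun (c + (- c - a1)) (a1 + (- c - a1))" by (rule lt_add)
    then have l1: "less_fun (- a1) (- c)" by (simp add: algebra_simps)
    have "- c \<in> U'" using c by (simp add: U'_def)
    then have "- c = a2 \<or> less_fun (- c) a2" using a2 by blast
    then have l2: "less_fun (- a1) a2" using l1 less_fun_trans by metis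
    have "- b1 \<in> W'" using b1 by (simp add: W'_def)
    then have l3: "less_fun (- b1) b2 \<or> - b1 = b2" using b2 by blast
    have "less_fun (- a1 + - b1) (a2 + b2)" using lt_add2[OF l2 l3] .
    moreover have "- a1 + - b1 = 0" using s1 by (simp add: add_eq_0_iff2 minus_add[symmetric])
    ultimately show False using s2 less_fun_irrefl by metis
  qed
  then show ?thesis by blast
qed


lemma ind_fs: "finite V \<Longrightarrow> V \<subseteq> Zk k \<Longrightarrow> (\<lambda>x. x \<in> V) \<in> fin_supp_Z2 k"
  by (simp add: fs_iff)

context wr_aut
begin

lemma Phi_zero: "Phi (\<lambda>_. False) = (\<lambda>_. False)"
proof -
  have "\<phi> ((\<lambda>_. False), 0) = ((\<lambda>_. False), 0)" using phi_one by (simp add: G_one)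
  then show ?thesis by (simp add: Phi_def)
qed

lemma Phi_fin: "finite V \<Longrightarrow> V \<subseteq> Zk k \<Longrightarrow> Phi (\<lambda>x. x \<in> V) = (\<lambda>x. odd (card {y\<in>V. u0 (x - lin y)}))"
proof (induction V rule: finite_induct)
  case empty
  then show ?case using Phi_zero by simp
next
  case (insert y V)
  have y: "y \<in> Zk k" and V: "V \<subseteq> Zk k" using insert by auto
  have e: "(\<lambda>x. x \<in> insert y V) = (\<lambda>x. (x \<in> V) \<noteq> (x = y))" using insert by auto
  have "Phi (\<lambda>x. x \<in> insert y V) = (\<lambda>x. Phi (\<lambda>x. x \<in> V) x \<noteq> Phi (\<lambda>x. x = y) x)"
    unfolding e by (rule Phi_xor[OF ind_fs[OF insert(1) V] delta_fs[OF y]])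
  also have "\<dots> = (\<lambda>x. odd (card {y\<in>V. u0 (x - lin y)}) \<noteq> u0 (x - lin y))"
    by (simp only: insert.IH[OF V] Phi_delta[OF y])
  also have "\<dots> = (\<lambda>x. odd (card {y'\<in>insert y V. u0 (x - lin y')}))"
  proof (rule ext)
    fix x
    have fin: "finite {y\<in>V. u0 (x - lin y)}" using insert by simp
    show "(odd (card {y\<in>V. u0 (x - lin y)}) \<noteq> u0 (x - lin y)) = odd (card {y'\<in>insert y V. u0 (x - lin y')})"
    proof (cases "u0 (x - lin y)")
      case True
      then have "{y'\<in>insert y V. u0 (x - lin y')} = insert y {y\<in>V. u0 (x - lin y)}" by auto
      then show ?thesis using True fin insert by simp
    next
      case False
      then have "{y'\<in>insert y V. u0 (x - lin y')} = {y\<in>V. u0 (x - lin y)}" by auto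
      then show ?thesis using False by simp
    qed
  qed
  finally show ?case .
qed

lemma u0_fs: "u0 \<in> fin_supp_Z2 k"
  unfolding u0_def by (rule phi_B_eq(2)) simp

lemma u0_delta: "\<exists>c\<in>Zk k. u0 = (\<lambda>x. x = c)"
proof -
  have "((\<lambda>x. x = 0), 0) \<in> carrier G" by (simp add: G_carrier)
  then obtain g where g: "g \<in> carrier G" "\<phi> g = ((\<lambda>x. x = 0), 0)" using phi_surj by blast
  obtain v y where gv: "g = (v, y)" by (cases g)
  have "y = 0" using phi_B[OF g(1)] g(2) gv by simp
  have v: "v \<in> fin_supp_Z2 k" using g(1) gv by (simp add: G_carrier)
  have pv: "Phi v = (\<lambda>x. x = 0)" using phi_B_eq(1)[OF v] g(2) gv \<open>y = 0\<close> by simp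
  define V where "V = {x. v x}"
  have V: "finite V" "V \<subseteq> Zk k" using v by (auto simp: fs_iff V_def)
  have vV: "v = (\<lambda>x. x \<in> V)" by (simp add: V_def)
  have pv': "Phi (\<lambda>x. x \<in> V) = (\<lambda>x. x = 0)" using pv unfolding vV .
  have fe: "(\<lambda>x. odd (card {y\<in>V. u0 (x - lin y)})) = (\<lambda>x. x = 0)"
    using trans[OF Phi_fin[OF V, symmetric] pv'] .
  have cnd: "odd (card {y\<in>V. u0 (x - lin y)}) \<longleftrightarrow> x = 0" for x
    using fun_cong[OF fe, of x] by simp
  define U where "U = {x. u0 x}"
  have U: "finite U" "U \<subseteq> Zk k" using u0_fs by (auto simp: fs_iff U_def)
  define W where "W = lin ` V"
  have W: "finite W" "W \<subseteq> Zk k" using V lin_Zk by (auto simp: W_def)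
  have injV: "inj_on lin V" using lin_inj V by (simp add: inj_on_def subset_iff)
  have cnd': "odd (card {w\<in>W. x - w \<in> U}) \<longleftrightarrow> x = 0" for x
  proof -
    have "{w\<in>W. x - w \<in> U} = lin ` {y\<in>V. u0 (x - lin y)}" by (auto simp: W_def U_def)
    moreover have "inj_on lin {y\<in>V. u0 (x - lin y)}" using injV by (rule inj_on_subset) auto
    ultimately have "card {w\<in>W. x - w \<in> U} = card {y\<in>V. u0 (x - lin y)}" by (simp add: card_image)
    then show ?thesis using cnd by simp
  qed
  obtain c where "U = {c}" using conv_unit[OF U(1) W(1) U(2) W(2) cnd'] by blast
  then have "u0 = (\<lambda>x. x = c)" "c \<in> Zk k" using U by (auto simp: U_def fun_eq_iff)
  then show ?thesis by blast
qed

definition cc where "cc = (SOME c. c \<in> Zk k \<and> u0 = (\<lambda>x. x = c))"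

lemma cc: "cc \<in> Zk k" "u0 = (\<lambda>x. x = cc)"
  using someI_ex[OF u0_delta[unfolded Bex_def]] by (auto simp: cc_def)

definition A where "A x = lin x + cc"

lemma A_Zk: "x \<in> Zk k \<Longrightarrow> A x \<in> Zk k" by (simp add: A_def lin_Zk cc)

lemma A_inj: "x \<in> Zk k \<Longrightarrow> y \<in> Zk k \<Longrightarrow> A x = A y \<Longrightarrow> x = y"
  using lin_inj by (simp add: A_def)

lemma A_surj: "w \<in> Zk k \<Longrightarrow> \<exists>x\<in>Zk k. A x = w"
  using lin_surj[of "w - cc"] cc by (auto simp: A_def) (metis diff_add_cancel)

lemma Phi_supp: assumes f: "f \<in> fin_supp_Z2 k" shows "{x. Phi f x} = A ` {x. f x}"
proof -
  define V where "V = {x. f x}"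
  have V: "finite V" "V \<subseteq> Zk k" using f by (auto simp: fs_iff V_def)
  have "f = (\<lambda>x. x \<in> V)" by (simp add: V_def)
  then have P: "Phi f = (\<lambda>x. odd (card {y\<in>V. u0 (x - lin y)}))" using Phi_fin[OF V] by simp
  have "odd (card {y\<in>V. u0 (x - lin y)}) \<longleftrightarrow> x \<in> A ` V" for x
  proof (cases "x \<in> A ` V")
    case True
    then obtain y where y: "y \<in> V" "x = A y" by blast
    have "{y\<in>V. u0 (x - lin y)} = {y}"
    proof (intro equalityI subsetI)
      fix y' assume "y' \<in> {y\<in>V. u0 (x - lin y)}"
      then have "y' \<in> V" "A y' = x" using cc by (auto simp: A_def algebra_simps)
      then show "y' \<in> {y}" using y A_inj V by blast
    qed (use y cc in \<open>auto simp: A_def\<close>)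
    then show ?thesis using True by simp
  next
    case False
    then have "{y\<in>V. u0 (x - lin y)} = {}" using cc by (auto simp: A_def algebra_simps)
    then show ?thesis using False by (simp only: card.empty) simp
  qed
  then show ?thesis using P by (simp add: V_def)
qed

lemma tc_snd: assumes "(g, g') \<in> twisted_conj G \<phi>"
  shows "\<exists>z\<in>Zk k. snd g' = snd g + z - lin z"
proof -
  obtain h where g: "g \<in> carrier G" and h: "h \<in> carrier G"
    and e: "g' = h \<otimes>\<^bsub>G\<^esub> g \<otimes>\<^bsub>G\<^esub> \<phi> (inv\<^bsub>G\<^esub> h)" using assms unfolding twisted_conj_def by blast
  obtain f z where hz: "h = (f, z)" by (cases h)
  obtain b y where gy: "g = (b, y)" by (cases g)
  have z: "z \<in> Zk k" "f \<in> fin_supp_Z2 k" using h hz by (auto simp: G_carrier)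
  have ic: "((\<lambda>x. f (x + z)), - z) \<in> carrier G" using z by (auto simp: G_carrier intro: fs_shift)
  have "snd (\<phi> (inv\<^bsub>G\<^esub> h)) = lin (- z)" using snd_phi[OF ic] G_inv h hz by simp
  then have "snd g' = z + y + lin (- z)" using e hz gy
    by (metis (no_types, lifting) G_mult prod.collapse snd_conv)
  then have "snd g' = snd g + z - lin z" using lin_uminus[OF z(1)] gy by (simp add: algebra_simps)
  then show ?thesis using z by blast
qed

lemma tc_B: assumes K: "\<forall>z\<in>Zk k. lin z = z \<longrightarrow> z = 0"
  and tc: "((b, 0), (b', 0)) \<in> twisted_conj G \<phi>"
  shows "\<exists>f\<in>fin_supp_Z2 k. b' = (\<lambda>x. (f x \<noteq> b x) \<noteq> Phi f x)"
proof -
  obtain h where g: "(b, 0) \<in> carrier G" and h: "h \<in> carrier G"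
    and e: "(b', 0) = h \<otimes>\<^bsub>G\<^esub> (b, 0) \<otimes>\<^bsub>G\<^esub> \<phi> (inv\<^bsub>G\<^esub> h)" using tc unfolding twisted_conj_def by blast
  obtain f z where hz: "h = (f, z)" by (cases h)
  have z: "z \<in> Zk k" and f: "f \<in> fin_supp_Z2 k" using h hz by (auto simp: G_carrier)
  obtain z' where z': "z' \<in> Zk k" "(0::nat\<Rightarrow>int) = 0 + z' - lin z'" using tc_snd[OF tc] by auto
  have "z = 0"
  proof -
    have ic: "((\<lambda>x. f (x + z)), - z) \<in> carrier G" using z f by (auto simp: G_carrier intro: fs_shift)
    have "snd (\<phi> (inv\<^bsub>G\<^esub> h)) = lin (- z)" using snd_phi[OF ic] G_inv h hz by simp
    then have "(0::nat\<Rightarrow>int) = z + 0 + lin (- z)" using e hz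
      by (metis (no_types, lifting) G_mult prod.collapse snd_conv)
    then have "lin z = z" using lin_uminus[OF z] by (simp add: algebra_simps eq_neg_iff_add_eq_0)
    then show ?thesis using K z by blast
  qed
  then have "inv\<^bsub>G\<^esub> h = (f, 0)" using G_inv h hz by simp
  then have "\<phi> (inv\<^bsub>G\<^esub> h) = (Phi f, 0)" using phi_B_eq(1)[OF f] by simp
  then have "(b', 0) = ((\<lambda>x. (f x \<noteq> b x) \<noteq> Phi f x), 0)" using e hz \<open>z = 0\<close> by (simp add: G_mult)
  then show ?thesis using f by blast
qed

end

definition red :: "int \<Rightarrow> (nat \<Rightarrow> int) \<Rightarrow> (nat \<Rightarrow> int)" where
  "red p x = (\<lambda>i. x i mod p)"

lemma red_Zk[simp]: "x \<in> Zk k \<Longrightarrow> red p x \<in> Zk k" by (simp add: Zk_iff red_def)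

lemma red_red[simp]: "red p (red p x) = red p x" by (simp add: red_def)

lemma red_eq_iff: "red p x = red p y \<longleftrightarrow> (\<forall>i. p dvd (x i - y i))"
  by (simp add: red_def fun_eq_iff mod_eq_dvd_iff)

lemma red_add: "red p (x + y) = red p (red p x + y)"
  by (simp add: red_def fun_eq_iff mod_add_left_eq)

lemma red_add2: "red p (x + y) = red p (x + red p y)"
  by (simp add: red_def fun_eq_iff mod_add_right_eq)

lemma red_smul: "red p (x + smul p d) = red p x"
  by (simp add: red_def smul_def fun_eq_iff)

lemma red_decomp: assumes "red p x = red p y" "x \<in> Zk k" "y \<in> Zk k"
  shows "\<exists>d\<in>Zk k. x = y + smul p d"
proof -
  define d where "d = (\<lambda>i. (x i - y i) div p)"
  have dv: "p dvd (x i - y i)" for i using assms(1) red_eq_iff by blast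
  have "x = y + smul p d" by (simp add: fun_eq_iff smul_def d_def dv)
  moreover have "d \<in> Zk k" using assms by (simp add: Zk_iff d_def)
  ultimately show ?thesis by blast
qed

lemma red_finite: assumes "p > 0" shows "finite (red p ` Zk k)"
proof -
  have "red p ` Zk k \<subseteq> (\<lambda>f i. if i < k then f i else 0) ` (PiE {..<k} (\<lambda>_. {0..<p}))"
  proof
    fix z assume "z \<in> red p ` Zk k"
    then obtain y where y: "y \<in> Zk k" "z = red p y" by blast
    have "restrict z {..<k} \<in> PiE {..<k} (\<lambda>_. {0..<p})" using assms y by (auto simp: red_def)
    moreover have "z = (\<lambda>i. if i < k then restrict z {..<k} i else 0)"
      using y by (auto simp: fun_eq_iff red_def Zk_iff)
    ultimately show "z \<in> (\<lambda>f i. if i < k then f i else 0) ` (PiE {..<k} (\<lambda>_. {0..<p}))" by blast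
  qed
  moreover have "finite (PiE {..<k} (\<lambda>_. {0..<p}))" by (rule finite_PiE) auto
  ultimately show ?thesis using finite_subset by blast
qed

definition aff :: "nat \<Rightarrow> ((nat \<Rightarrow> int) \<Rightarrow> (nat \<Rightarrow> int)) \<Rightarrow> bool" where
  "aff k S \<longleftrightarrow> (\<forall>x\<in>Zk k. S x \<in> Zk k) \<and> (\<forall>x\<in>Zk k. \<forall>y\<in>Zk k. S (x + y) = S x + S y - S 0)"

lemma aff_Zk: "aff k S \<Longrightarrow> x \<in> Zk k \<Longrightarrow> S x \<in> Zk k" by (simp add: aff_def)
lemma aff_add: "aff k S \<Longrightarrow> x \<in> Zk k \<Longrightarrow> y \<in> Zk k \<Longrightarrow> S (x + y) = S x + S y - S 0" by (simp add: aff_def)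

lemma aff_diff: assumes "aff k S" "x \<in> Zk k" "y \<in> Zk k" shows "S (x - y) = S x - S y + S 0"
proof -
  have "S x = S (x - y + y)" by simp
  also have "\<dots> = S (x - y) + S y - S 0" using aff_add[OF assms(1), of "x - y" y] assms by simp
  finally show ?thesis by (simp add: algebra_simps)
qed

lemma aff_comp: assumes "aff k S" "aff k R" shows "aff k (S \<circ> R)"
  unfolding aff_def
proof (intro conjI ballI)
  fix x assume "x \<in> Zk k" then show "(S \<circ> R) x \<in> Zk k" using assms aff_Zk by simp
next
  fix x y assume x: "x \<in> Zk k" and y: "y \<in> Zk k"
  have r: "R x \<in> Zk k" "R y \<in> Zk k" "R 0 \<in> Zk k" using assms(2) x y aff_Zk by auto
  have rr: "R (x + y) = R x + (R y - R 0)" by (simp add: aff_add[OF assms(2) x y] algebra_simps)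
  have "S (R (x + y)) = S (R x + (R y - R 0))" by (simp only: rr)
  also have "\<dots> = S (R x) + S (R y - R 0) - S 0" using aff_add[OF assms(1)] r by simp
  also have "\<dots> = S (R x) + S (R y) - S (R 0)" using aff_diff[OF assms(1)] r by simp
  finally show "(S \<circ> R) (x + y) = (S \<circ> R) x + (S \<circ> R) y - (S \<circ> R) 0" by simp
qed

lemma aff_id: "aff k id" by (simp add: aff_def)

lemma aff_pow: "aff k S \<Longrightarrow> aff k (S ^^ n)"
  by (induction n) (auto simp: aff_id intro: aff_comp)

lemma aff_smul_nat: assumes S: "aff k S" and d: "d \<in> Zk k"
  shows "S (smul (int n) d) i - S 0 i = int n * (S d i - S 0 i)"
proof (induction n)
  case 0
  have "smul (int 0) d = 0" by (simp add: smul_def fun_eq_iff)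
  then show ?case by simp
next
  case (Suc n)
  have e: "smul (int (Suc n)) d = smul (int n) d + d" by (simp add: smul_def fun_eq_iff algebra_simps)
  have "S (smul (int (Suc n)) d) = S (smul (int n) d) + S d - S 0"
    unfolding e using d by (intro aff_add[OF S]) auto
  then have 1: "S (smul (int (Suc n)) d) i = S (smul (int n) d) i + S d i - S 0 i"
    by simp
  have 2: "int (Suc n) * (S d i - S 0 i) = int n * (S d i - S 0 i) + (S d i - S 0 i)" by (simp add: algebra_simps)
  show ?case unfolding 1 2 using Suc.IH by linarith
qed

lemma aff_red: assumes S: "aff k S" and p: "p \<ge> 0" and x: "x \<in> Zk k" and y: "y \<in> Zk k"
  and r: "red p x = red p y" shows "red p (S x) = red p (S y)"
proof -
  obtain d where d: "d \<in> Zk k" "x = y + smul p d" using red_decomp[OF r x y] by blast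
  have pn: "p = int (nat p)" using p by simp
  have "S x = S y + S (smul p d) - S 0" unfolding d(2) using d y by (intro aff_add[OF S]) auto
  then have 1: "S x i = S y i + S (smul p d) i - S 0 i" for i by simp
  have 2: "S (smul p d) i - S 0 i = p * (S d i - S 0 i)" for i
    using aff_smul_nat[OF S d(1), of "nat p" i, folded pn] .
  have "S x i - S y i = p * (S d i - S 0 i)" for i using 1[of i] 2[of i] by linarith
  then have "\<forall>i. p dvd (S x i - S y i)" by simp
  then show ?thesis using red_eq_iff by blast
qed

lemma aff_double:
  assumes S: "aff k S" and q: "q > 0" "even q"
    and c: "\<forall>x\<in>Zk k. red q (S x) = red q x"
  shows "\<forall>x\<in>Zk k. red (2 * q) (S (S x)) = red (2 * q) x"
proof
  fix x assume x: "x \<in> Zk k"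
  define E where "E = (\<lambda>x i. (S x i - x i) div q)"
  have Ed: "S y i = y i + q * E y i" if "y \<in> Zk k" for y i
  proof -
    have "q dvd (S y i - y i)" using c that red_eq_iff by blast
    then show ?thesis by (simp add: E_def)
  qed
  have EZ: "E y \<in> Zk k" if "y \<in> Zk k" for y using that aff_Zk[OF S that] by (simp add: Zk_iff E_def)
  define e where "e = E x"
  have e: "e \<in> Zk k" using EZ x by (simp add: e_def)
  have qn: "q = int (nat q)" using q by simp
  have Sx: "S x = x + smul q e" using Ed[OF x] by (simp add: fun_eq_iff smul_def e_def)
  have "S (S x) = S (x + smul q e)" by (simp only: Sx)
  also have "\<dots> = S x + S (smul q e) - S 0" using x e by (intro aff_add[OF S]) auto
  finally have A1: "S (S x) = S x + S (smul q e) - S 0" .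
  obtain q2 where q2: "q = 2 * q2" using q(2) by blast
  have "S (S x) i - x i = (2 * q) * (e i + q2 * (E e i - E 0 i))" for i
  proof -
    have 1: "S (S x) i = S x i + S (smul q e) i - S 0 i" using A1 by simp
    have 2: "S (smul q e) i - S 0 i = q * (S e i - S 0 i)"
      using aff_smul_nat[OF S e, of "nat q" i, folded qn] .
    have 3: "S x i = x i + q * e i" using Ed[OF x] by (simp add: e_def)
    have 4: "S e i = e i + q * E e i" "S 0 i = q * E 0 i" using Ed[OF e] Ed[of 0] by auto
    show ?thesis using 1 2 3 4 by (simp add: algebra_simps q2)
  qed
  then have "\<forall>i. (2 * q) dvd (S (S x) i - x i)" by simp
  then show "red (2 * q) (S (S x)) = red (2 * q) x" using red_eq_iff by blast
qed


context wr_aut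
begin

definition Fp :: "int \<Rightarrow> ((nat \<Rightarrow> int) \<Rightarrow> bool) \<times> (nat \<Rightarrow> int) \<Rightarrow> (nat \<Rightarrow> int) set" where "Fp p g = (\<lambda>z. red p (snd g + z - lin z)) ` Zk k"

lemma Fp_inv: assumes "(g, g') \<in> twisted_conj G \<phi>" shows "Fp p g = Fp p g'"
proof -
  obtain z where z: "z \<in> Zk k" "snd g' = snd g + z - lin z" using tc_snd[OF assms] by blast
  show ?thesis
  proof (intro equalityI subsetI)
    fix a assume "a \<in> Fp p g"
    then obtain w where w: "w \<in> Zk k" "a = red p (snd g + w - lin w)" by (auto simp: Fp_def)
    have eq: "snd g + w - lin w = snd g' + (w - z) - lin (w - z)"
      unfolding z(2) lin_diff[OF w(1) z(1)] by (simp add: algebra_simps)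
    have "a = red p (snd g' + (w - z) - lin (w - z))" by (simp only: w(2) eq)
    moreover have "w - z \<in> Zk k" using w z by simp
    ultimately show "a \<in> Fp p g'" unfolding Fp_def by blast
  next
    fix a assume "a \<in> Fp p g'"
    then obtain w where w: "w \<in> Zk k" "a = red p (snd g' + w - lin w)" by (auto simp: Fp_def)
    have eq: "snd g' + w - lin w = snd g + (z + w) - lin (z + w)"
      unfolding z(2) lin_add[OF z(1) w(1)] by (simp add: algebra_simps)
    have "a = red p (snd g + (z + w) - lin (z + w))" by (simp only: w(2) eq)
    moreover have "z + w \<in> Zk k" using w z by simp
    ultimately show "a \<in> Fp p g" unfolding Fp_def by blast
  qed
qed

lemma aff_IL: "aff k (\<lambda>x. x - lin x)"
  unfolding aff_def using lin_Zk lin_add lin_0 by (auto simp: algebra_simps)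

lemma red_IL: assumes "p \<ge> 0" "x \<in> Zk k" "x' \<in> Zk k" "red p x = red p x'"
  shows "red p (x - lin x) = red p (x' - lin x')"
  using aff_red[OF aff_IL assms] .

lemma caseB_count:
  assumes z0: "z0 \<in> Zk k" "lin z0 = z0" "z0 i0 \<noteq> 0"
    and p: "prime p" "int p > \<bar>z0 i0\<bar>"
  shows "p \<le> card ((\<lambda>y. Fp (int p) ((\<lambda>_. False), y)) ` Zk k)"
proof -
  define P where "P = int p"
  have P0: "P > 0" using p prime_gt_0_nat by (auto simp: P_def)
  define H where "H = red P ` Zk k"
  have finH: "finite H" using red_finite[OF P0] by (simp add: H_def)
  define Im where "Im = (\<lambda>z. red P (z - lin z)) ` Zk k"
  have ImH: "Im \<subseteq> H" using lin_Zk by (auto simp: Im_def H_def)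
  have finIm: "finite Im" using finite_subset[OF ImH finH] .
  have "red P (0 - lin 0) \<in> Im" unfolding Im_def by (rule image_eqI[of _ _ 0]) simp_all
  then have Imne: "Im \<noteq> {}" by blast
  define C where "C = (\<lambda>y. Fp P ((\<lambda>_. False), y)) ` Zk k"
  define fib where "fib w = {h\<in>H. red P (h - lin h) = w}" for w
  have fibp: "p \<le> card (fib w)" if w: "w \<in> Im" for w
  proof -
    obtain z where z: "z \<in> Zk k" "w = red P (z - lin z)" using w by (auto simp: Im_def)
    define g where "g t = red P (z + smul (int t) z0)" for t
    have gin: "g ` {0..<p} \<subseteq> fib w"
    proof
      fix h assume "h \<in> g ` {0..<p}"
      then obtain t where t: "h = g t" by blast
      define x where "x = z + smul (int t) z0"
      have x: "x \<in> Zk k" using z z0 by (simp add: x_def)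
      have hx: "h = red P x" by (simp add: t g_def x_def)
      have e1: "red P (h - lin h) = red P (x - lin x)"
        using red_IL[of P h x] P0 x hx by simp
      have e2: "x - lin x = z - lin z"
        using lin_add[OF z(1) Zk_smul[OF z0(1)]] lin_smul[OF z0(1)] z0(2) by (simp add: x_def)
      have "red P (h - lin h) = w" unfolding e1 e2 z(2) ..
      moreover have "h \<in> H" using x hx by (simp add: H_def)
      ultimately show "h \<in> fib w" by (simp add: fib_def)
    qed
    have inj: "inj_on g {0..<p}"
    proof (rule inj_onI)
      fix t t' assume tt: "t \<in> {0..<p}" "t' \<in> {0..<p}" "g t = g t'"
      then have "(z i0 + int t * z0 i0) mod P = (z i0 + int t' * z0 i0) mod P"
        by (auto simp: g_def red_def fun_eq_iff smul_def)
      then have "P dvd (int t - int t') * z0 i0" by (simp add: mod_eq_dvd_iff algebra_simps)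
      moreover have "prime P" using p by (simp add: P_def)
      ultimately have "P dvd (int t - int t') \<or> P dvd z0 i0" using prime_dvd_mult_iff by blast
      moreover have "\<not> P dvd z0 i0"
      proof
        assume "P dvd z0 i0"
        then have "\<bar>P\<bar> \<le> \<bar>z0 i0\<bar>" using dvd_imp_le_int[OF z0(3)] by blast
        then show False using p P0 by (simp add: P_def)
      qed
      ultimately have d: "P dvd (int t - int t')" by blast
      have "\<bar>int t - int t'\<bar> < P" using tt by (auto simp: P_def)
      then have "int t - int t' = 0"
      proof -
        assume lt: "\<bar>int t - int t'\<bar> < P"
        show ?thesis
        proof (rule ccontr)
          assume ne: "int t - int t' \<noteq> 0"
          have "\<bar>P\<bar> \<le> \<bar>int t - int t'\<bar>" using dvd_imp_le_int[OF ne d] .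
          then show False using lt by linarith
        qed
      qed
      then show "t = t'" by simp
    qed
    have "finite (fib w)" using finH by (simp add: fib_def)
    then have "card (g ` {0..<p}) \<le> card (fib w)" using gin card_mono by blast
    then show ?thesis using card_image[OF inj] by simp
  qed
  have disj: "\<forall>w\<in>Im. \<forall>w'\<in>Im. w \<noteq> w' \<longrightarrow> fib w \<inter> fib w' = {}" by (auto simp: fib_def)
  have "card (\<Union>w\<in>Im. fib w) = (\<Sum>w\<in>Im. card (fib w))"
    using card_UN_disjoint[OF finIm _ disj] finH by (simp add: fib_def)
  moreover have "(\<Sum>w\<in>Im. card (fib w)) \<ge> card Im * p"
    using sum_bounded_below[of Im p "\<lambda>w. card (fib w)"] fibp by simp
  moreover have "card (\<Union>w\<in>Im. fib w) \<le> card H"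
    using finH by (intro card_mono) (auto simp: fib_def)
  ultimately have i: "card Im * p \<le> card H" by linarith
  have Cfib: "c \<subseteq> H \<and> card c \<le> card Im" if cC: "c \<in> C" for c
  proof -
    obtain y where y: "y \<in> Zk k" "c = Fp P ((\<lambda>_. False), y)" using cC unfolding C_def by blast
    have "c = (\<lambda>w. red P (y + w)) ` Im"
    proof -
      have "red P (y + z - lin z) = red P (y + red P (z - lin z))" for z
        using red_add2[of P y "z - lin z"] by (simp add: algebra_simps)
      then show ?thesis by (auto simp: y Fp_def Im_def image_image)
    qed
    then have "card c \<le> card Im" using card_image_le finIm by simp
    moreover have "c \<subseteq> H" using y lin_Zk by (auto simp: Fp_def H_def)
    ultimately show ?thesis by blast
  qed
  have finC: "finite C"
  proof -
    have "C \<subseteq> Pow H" using Cfib by auto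
    then show ?thesis using finH finite_subset by blast
  qed
  have HC: "H \<subseteq> \<Union>C"
  proof
    fix h assume "h \<in> H"
    then obtain y where y: "y \<in> Zk k" "h = red P y" by (auto simp: H_def)
    have "h \<in> Fp P ((\<lambda>_. False), y)" using y lin_0 by (auto simp: Fp_def intro!: image_eqI[of _ _ 0])
    then show "h \<in> \<Union>C" using y by (auto simp: C_def)
  qed
  have "finite (\<Union>C)" using finC Cfib finH by (meson finite_Union finite_subset)
  then have "card H \<le> card (\<Union>C)" using HC by (intro card_mono) auto
  also have "\<dots> \<le> sum card C" by (rule card_Union_le_sum_card)
  also have "\<dots> \<le> card C * card Im" using sum_bounded_above[of C card "card Im"] Cfib by simp
  finally have "card Im * p \<le> card C * card Im" using i by linarith
  moreover have "card Im > 0" using Imne finIm card_gt_0_iff by blast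
  ultimately have "p \<le> card C" by (simp add: mult.commute)
  then show ?thesis unfolding C_def P_def .
qed

lemma caseB:
  assumes z0: "z0 \<in> Zk k" "z0 \<noteq> 0" "lin z0 = z0"
  shows "infinite (reidemeister_classes G \<phi>)"
proof
  assume fin: "finite (reidemeister_classes G \<phi>)"
  obtain i0 where i0: "z0 i0 \<noteq> 0" using z0(2) by (auto simp: fun_eq_iff)
  obtain p where p: "prime p" "p > max (nat \<bar>z0 i0\<bar>) (card (reidemeister_classes G \<phi>))"
    using bigger_prime by blast
  have pz: "int p > \<bar>z0 i0\<bar>" using p by linarith
  have c1: "p \<le> card ((\<lambda>y. Fp (int p) ((\<lambda>_. False), y)) ` Zk k)" using caseB_count[OF z0(1) z0(3) i0 p(1) pz] .
  have sub: "(\<lambda>y. Fp (int p) ((\<lambda>_. False), y)) ` Zk k \<subseteq> Fp (int p) ` carrier G"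
    by (auto simp: G_carrier)
  have c2: "finite (Fp (int p) ` carrier G) \<and> card (Fp (int p) ` carrier G) \<le> card (reidemeister_classes G \<phi>)"
    using card_img_le_quot[OF tc_equiv, of "Fp (int p)"] Fp_inv fin unfolding reidemeister_classes_def by blast
  have "card ((\<lambda>y. Fp (int p) ((\<lambda>_. False), y)) ` Zk k) \<le> card (Fp (int p) ` carrier G)"
    using c2 sub card_mono by blast
  then show False using c1 c2 p by linarith
qed

end

lemma par_xor:
  assumes "finite {x. f x}" "finite {x. g x}"
  shows "even (card ({x. f x \<noteq> g x} \<inter> Ob) + card ({x. f x} \<inter> Ob) + card ({x. g x} \<inter> Ob))"
proof -
  define P where "P = {x. f x} \<inter> Ob"
  define Q where "Q = {x. g x} \<inter> Ob"
  have fin: "finite P" "finite Q" using assms by (auto simp: P_def Q_def)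
  have e: "{x. f x \<noteq> g x} \<inter> Ob = (P \<union> Q) - (P \<inter> Q)" by (auto simp: P_def Q_def)
  have c1: "card ((P \<union> Q) - (P \<inter> Q)) = card (P \<union> Q) - card (P \<inter> Q)"
    using fin by (intro card_Diff_subset) auto
  have c2: "card P + card Q = card (P \<union> Q) + card (P \<inter> Q)" using card_Un_Int[OF fin] .
  have c3: "card (P \<inter> Q) \<le> card (P \<union> Q)" using fin by (intro card_mono) auto
  have "card ({x. f x \<noteq> g x} \<inter> Ob) + card ({x. f x} \<inter> Ob) + card ({x. g x} \<inter> Ob) = 2 * card (P \<union> Q)"
    unfolding e c1 using c2 c3 by (simp add: P_def Q_def)
  then show ?thesis by simp
qed

lemma funpow_split2: "n \<le> m \<Longrightarrow> (f ^^ (m - n)) ((f ^^ n) x) = (f ^^ m) x"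
  by (metis funpow_add comp_apply le_add_diff_inverse2)

lemma funpow_split: "m \<le> n \<Longrightarrow> (f ^^ m) ((f ^^ (n - m)) x) = (f ^^ n) x"
  by (metis funpow_add comp_apply le_add_diff_inverse)

context wr_aut
begin

lemma Apow_Zk: "x \<in> Zk k \<Longrightarrow> (A ^^ n) x \<in> Zk k"
  by (induction n) (auto simp: A_Zk)

lemma Apow_inj: "x \<in> Zk k \<Longrightarrow> y \<in> Zk k \<Longrightarrow> (A ^^ n) x = (A ^^ n) y \<Longrightarrow> x = y"
proof (induction n)
  case 0 then show ?case by simp
next
  case (Suc n)
  then show ?case using A_inj Apow_Zk by auto
qed

lemma Apow_surj: "w \<in> Zk k \<Longrightarrow> \<exists>x\<in>Zk k. (A ^^ n) x = w"
proof (induction n arbitrary: w)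
  case 0 then show ?case by auto
next
  case (Suc n)
  obtain v where v: "v \<in> Zk k" "A v = w" using A_surj Suc.prems by blast
  obtain x where x: "x \<in> Zk k" "(A ^^ n) x = v" using Suc.IH v by blast
  have "(A ^^ Suc n) x = w" using x v by simp
  then show ?case using x by blast
qed

lemma aff_A: "aff k A"
  unfolding aff_def using A_Zk lin_add lin_0 by (auto simp: A_def algebra_simps)

lemma aff_Apow: "aff k (A ^^ n)" using aff_pow[OF aff_A] .

definition OR where
  "OR = {(x, y). x \<in> Zk k \<and> y \<in> Zk k \<and> (\<exists>n. (A ^^ n) x = y \<or> (A ^^ n) y = x)}"

lemma OR_equiv: "equiv (Zk k) OR"
proof (rule equivI)
  show "OR \<subseteq> Zk k \<times> Zk k" by (auto simp: OR_def)
  show "refl_on (Zk k) OR" by (rule refl_onI) (auto simp: OR_def intro: exI[of _ 0])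
  show "sym OR" by (rule symI) (auto simp: OR_def)
  show "trans OR"
  proof (rule transI)
    fix x y z assume xy: "(x, y) \<in> OR" and yz: "(y, z) \<in> OR"
    then have Z: "x \<in> Zk k" "y \<in> Zk k" "z \<in> Zk k" by (auto simp: OR_def)
    obtain n where n: "(A ^^ n) x = y \<or> (A ^^ n) y = x" using xy by (auto simp: OR_def)
    obtain m where m: "(A ^^ m) y = z \<or> (A ^^ m) z = y" using yz by (auto simp: OR_def)
    have "\<exists>l. (A ^^ l) x = z \<or> (A ^^ l) z = x"
    proof -
      { assume a: "(A ^^ n) x = y" and b: "(A ^^ m) y = z"
        have "(A ^^ (m + n)) x = z" using a b by (simp add: funpow_add)
        then have ?thesis by blast }
      moreover
      { assume a: "(A ^^ n) y = x" and b: "(A ^^ m) z = y"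
        have "(A ^^ (n + m)) z = x" using a b by (simp add: funpow_add)
        then have ?thesis by blast }
      moreover
      { assume a: "(A ^^ n) x = y" and b: "(A ^^ m) z = y"
        have ?thesis
        proof (cases "m \<le> n")
          case True
          have "(A ^^ m) ((A ^^ (n - m)) x) = (A ^^ m) z"
            using a b funpow_split[OF True, of A x] by simp
          then have "(A ^^ (n - m)) x = z" using Apow_inj Apow_Zk Z by blast
          then show ?thesis by blast
        next
          case False
          have "(A ^^ n) ((A ^^ (m - n)) z) = (A ^^ n) x"
            using a b funpow_split[of n m A z] False by simp
          then have "(A ^^ (m - n)) z = x" using Apow_inj Apow_Zk Z by blast
          then show ?thesis by blast
        qed }
      moreover
      { assume a: "(A ^^ n) y = x" and b: "(A ^^ m) y = z"
        have ?thesis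
        proof (cases "n \<le> m")
          case True
          have "(A ^^ (m - n)) x = z"
            using a b funpow_split2[OF True, of A y] by simp
          then show ?thesis by blast
        next
          case False
          have "(A ^^ (n - m)) z = x"
            using a b funpow_split2[of m n A y] False by simp
          then show ?thesis by blast
        qed }
      ultimately show ?thesis using n m by blast
    qed
    then show "(x, z) \<in> OR" using Z by (auto simp: OR_def)
  qed
qed

lemma class_inv: assumes Ob: "Ob \<in> Zk k // OR" and y: "y \<in> Zk k"
  shows "A y \<in> Ob \<longleftrightarrow> y \<in> Ob"
proof -
  have st: "(y, A y) \<in> OR" using y A_Zk by (auto simp: OR_def intro: exI[of _ 1])
  obtain x0 where x0: "Ob = OR``{x0}" "x0 \<in> Zk k" using Ob by (auto elim: quotientE)
  show ?thesis
  proof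
    assume "A y \<in> Ob"
    then have "(x0, A y) \<in> OR" using x0 by simp
    then have "(x0, y) \<in> OR" using st OR_equiv by (meson equivE symD transD)
    then show "y \<in> Ob" using x0 by simp
  next
    assume "y \<in> Ob"
    then have "(x0, y) \<in> OR" using x0 by simp
    then have "(x0, A y) \<in> OR" using st OR_equiv by (meson equivE transD)
    then show "A y \<in> Ob" using x0 by simp
  qed
qed

lemma class_sub: "Ob \<in> Zk k // OR \<Longrightarrow> Ob \<subseteq> Zk k"
  using OR_equiv in_quotient_imp_subset by blast

lemma tc_par:
  assumes K: "\<forall>z\<in>Zk k. lin z = z \<longrightarrow> z = 0"
    and tc: "((b, 0), (b', 0)) \<in> twisted_conj G \<phi>"
    and Ob: "Ob \<in> Zk k // OR"
  shows "even (card ({x. b x} \<inter> Ob) + card ({x. b' x} \<inter> Ob))"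
proof -
  have b: "b \<in> fin_supp_Z2 k" using tc by (auto simp: twisted_conj_def G_carrier)
  obtain f where f: "f \<in> fin_supp_Z2 k" and b': "b' = (\<lambda>x. (f x \<noteq> b x) \<noteq> Phi f x)"
    using tc_B[OF K tc] by blast
  have fb: "(\<lambda>x. f x \<noteq> b x) \<in> fin_supp_Z2 k" using xor_fs[OF f b] .
  have pf: "Phi f \<in> fin_supp_Z2 k" using phi_B_eq(2)[OF f] .
  have "{x. Phi f x} \<inter> Ob = A ` ({x. f x} \<inter> Ob)"
  proof -
    have fz: "{x. f x} \<subseteq> Zk k" using f by (simp add: fs_iff)
    have "{x. Phi f x} \<inter> Ob = A ` {x. f x} \<inter> Ob" using Phi_supp[OF f] by simp
    also have "\<dots> = A ` ({x. f x} \<inter> Ob)" using class_inv[OF Ob] fz by blast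
    finally show ?thesis .
  qed
  moreover have "inj_on A ({x. f x} \<inter> Ob)"
    using A_inj f by (auto simp: inj_on_def fs_iff)
  ultimately have cP: "card ({x. Phi f x} \<inter> Ob) = card ({x. f x} \<inter> Ob)" by (simp add: card_image)
  have e1: "even (card ({x. (f x \<noteq> b x)} \<inter> Ob) + card ({x. f x} \<inter> Ob) + card ({x. b x} \<inter> Ob))"
    using par_xor[of f b Ob] f b unfolding fs_iff by blast
  have e2: "even (card ({x. (f x \<noteq> b x) \<noteq> Phi f x} \<inter> Ob) + card ({x. (f x \<noteq> b x)} \<inter> Ob) + card ({x. Phi f x} \<inter> Ob))"
    using par_xor[of "\<lambda>x. f x \<noteq> b x" "Phi f" Ob] fb pf unfolding fs_iff by blast
  have ar: "\<And>a m p q r::nat. even (m + p + q) \<Longrightarrow> even (a + m + r) \<Longrightarrow> r = p \<Longrightarrow> even (q + a)"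
    by presburger
  show ?thesis unfolding b' using ar[OF e1 e2 cP] .
qed

lemma classes_ge_orbits:
  assumes K: "\<forall>z\<in>Zk k. lin z = z \<longrightarrow> z = 0"
    and fin: "finite (reidemeister_classes G \<phi>)"
  shows "finite (Zk k // OR) \<and> card (Zk k // OR) \<le> card (reidemeister_classes G \<phi>)"
proof -
  define rep where "rep Ob = (SOME x. x \<in> Ob)" for Ob :: "(nat \<Rightarrow> int) set"
  define \<Psi> where "\<Psi> Ob = twisted_conj G \<phi> `` {((\<lambda>x. x = rep Ob), 0)}" for Ob
  have rep: "rep Ob \<in> Ob" "Ob = OR `` {rep Ob}" "rep Ob \<in> Zk k" if Ob: "Ob \<in> Zk k // OR" for Ob
  proof -
    obtain x0 where x0: "Ob = OR``{x0}" "x0 \<in> Zk k" using Ob by (auto elim: quotientE)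
    have "x0 \<in> Ob" using x0 OR_equiv equiv_class_self by metis
    then show r: "rep Ob \<in> Ob" unfolding rep_def by (rule someI[of "\<lambda>x. x \<in> Ob"])
    then have "(x0, rep Ob) \<in> OR" using x0 by simp
    then show "Ob = OR `` {rep Ob}" using x0 OR_equiv equiv_class_eq by metis
    show "rep Ob \<in> Zk k" using r class_sub[OF Ob] by blast
  qed
  have inG: "((\<lambda>x. x = rep Ob), 0) \<in> carrier G" if "Ob \<in> Zk k // OR" for Ob
    using rep[OF that] by (simp add: G_carrier)
  have sub: "\<Psi> ` (Zk k // OR) \<subseteq> reidemeister_classes G \<phi>"
    unfolding reidemeister_classes_def \<Psi>_def using inG by (auto intro: quotientI)
  have inj: "inj_on \<Psi> (Zk k // OR)"
  proof (rule inj_onI)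
    fix O1 O2 assume O1: "O1 \<in> Zk k // OR" and O2: "O2 \<in> Zk k // OR" and e: "\<Psi> O1 = \<Psi> O2"
    have "(((\<lambda>x. x = rep O1), 0), ((\<lambda>x. x = rep O2), 0)) \<in> twisted_conj G \<phi>"
      using e eq_equiv_class_iff[OF tc_equiv inG[OF O1] inG[OF O2]] by (simp add: \<Psi>_def)
    then have ev: "even (card ({x. x = rep O1} \<inter> O1) + card ({x. x = rep O2} \<inter> O1))"
      using tc_par[OF K _ O1] by blast
    have "{x. x = rep O1} \<inter> O1 = {rep O1}" using rep[OF O1] by auto
    then have "odd (card ({x. x = rep O2} \<inter> O1))" using ev by simp
    then have "{x. x = rep O2} \<inter> O1 \<noteq> {}" by (metis card.empty even_zero)
    then have "rep O2 \<in> O1" by auto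
    then have "(rep O1, rep O2) \<in> OR" using rep[OF O1] by blast
    then have "OR``{rep O1} = OR``{rep O2}" using OR_equiv equiv_class_eq by metis
    then show "O1 = O2" using rep[OF O1] rep[OF O2] by simp
  qed
  have "finite (\<Psi> ` (Zk k // OR))" using sub fin finite_subset by blast
  then have "finite (Zk k // OR)" using inj finite_imageD by blast
  moreover have "card (Zk k // OR) \<le> card (reidemeister_classes G \<phi>)"
    using card_inj_on_le[OF inj sub fin] .
  ultimately show ?thesis by blast
qed

end

context wr_aut
begin

lemma Apow_red: assumes "p \<ge> 0" "x \<in> Zk k" "y \<in> Zk k" "red p x = red p y"
  shows "red p ((A ^^ n) x) = red p ((A ^^ n) y)"
  using aff_red[OF aff_Apow assms] .

lemma iterP: assumes p: "p \<ge> 0" and P: "\<forall>x\<in>Zk k. red p ((A ^^ P) x) = red p x" and y: "y \<in> Zk k"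
  shows "red p ((A ^^ (q * P)) y) = red p y"
proof (induction q)
  case 0 then show ?case by simp
next
  case (Suc q)
  have "(A ^^ (Suc q * P)) y = (A ^^ P) ((A ^^ (q * P)) y)" by (simp add: funpow_add)
  then have "red p ((A ^^ (Suc q * P)) y) = red p ((A ^^ (q * P)) y)" using P Apow_Zk[OF y] by simp
  then show ?case using Suc by simp
qed

lemma modP: assumes p: "p \<ge> 0" and P: "\<forall>x\<in>Zk k. red p ((A ^^ P) x) = red p x" and x: "x \<in> Zk k"
  shows "red p ((A ^^ n) x) = red p ((A ^^ (n mod P)) x)"
proof -
  have "(A ^^ n) x = (A ^^ (n div P * P)) ((A ^^ (n mod P)) x)"
    by (metis comp_apply div_mult_mod_eq funpow_add)
  then show ?thesis using iterP[OF p P Apow_Zk[OF x]] by simp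
qed

lemma orbit_count:
  assumes P0: "P > 0" and p: "p > 0" and P: "\<forall>x\<in>Zk k. red p ((A ^^ P) x) = red p x"
    and fin: "finite (Zk k // OR)"
  shows "card (red p ` Zk k) \<le> card (Zk k // OR) * P"
proof -
  have each: "card (red p ` Ob) \<le> P" if Ob: "Ob \<in> Zk k // OR" for Ob
  proof -
    obtain x0 where x0: "Ob = OR``{x0}" "x0 \<in> Zk k" using Ob by (auto elim: quotientE)
    have "red p ` Ob \<subseteq> (\<lambda>n. red p ((A ^^ n) x0)) ` {..<P}"
    proof
      fix r assume "r \<in> red p ` Ob"
      then obtain z where z: "z \<in> Ob" "r = red p z" by blast
      then have "(x0, z) \<in> OR" using x0 by simp
      then obtain n where zz: "z \<in> Zk k" "(A ^^ n) x0 = z \<or> (A ^^ n) z = x0" by (auto simp: OR_def)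
      show "r \<in> (\<lambda>n. red p ((A ^^ n) x0)) ` {..<P}"
        using zz(2)
      proof
        assume a: "(A ^^ n) x0 = z"
        have "r = red p ((A ^^ (n mod P)) x0)" using modP[of p P x0 n] p P x0 a z by simp
        then show ?thesis using P0 by auto
      next
        assume a: "(A ^^ n) z = x0"
        have "red p z = red p ((A ^^ (n * P)) z)" using iterP[OF _ P zz(1), of n] p by simp
        also have "(A ^^ (n * P)) z = (A ^^ (n * P - n)) ((A ^^ n) z)"
          using funpow_split2[of n "n * P" A z] P0 by simp
        also have "red p ((A ^^ (n * P - n)) ((A ^^ n) z)) = red p ((A ^^ ((n * P - n) mod P)) x0)"
          using modP[of p P x0 "n * P - n"] p P x0 a by simp
        finally have "r = red p ((A ^^ ((n * P - n) mod P)) x0)" using z by simp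
        then show ?thesis using P0 by auto
      qed
    qed
    then have "card (red p ` Ob) \<le> card ((\<lambda>n. red p ((A ^^ n) x0)) ` {..<P})" by (intro card_mono) auto
    also have "\<dots> \<le> card {..<P}" by (rule card_image_le) simp
    finally show ?thesis by simp
  qed
  have "red p ` Zk k = (\<Union>Ob\<in>Zk k // OR. red p ` Ob)" using Union_quotient[OF OR_equiv] by blast
  then have "card (red p ` Zk k) \<le> (\<Sum>Ob\<in>Zk k // OR. card (red p ` Ob))" using card_UN_le[OF fin] by simp
  also have "\<dots> \<le> card (Zk k // OR) * P" using sum_bounded_above[of "Zk k // OR" "\<lambda>Ob. card (red p ` Ob)" P] each by simp
  finally show ?thesis .
qed

lemma k1_inv: assumes K: "\<forall>z\<in>Zk k. lin z = z \<longrightarrow> z = 0" and k1: "k = 1"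
  shows "x \<in> Zk k \<Longrightarrow> A (A x) = x"
proof -
  define e0 :: "nat \<Rightarrow> int" where "e0 = (\<lambda>i. if i = 0 then 1 else 0)"
  have e0: "e0 \<in> Zk k" using k1 by (simp add: Zk_iff e0_def)
  have dec: "y = smul (y 0) e0" if "y \<in> Zk k" for y
    using that k1 by (auto simp: fun_eq_iff smul_def e0_def Zk_iff)
  define a where "a = lin e0 0"
  have le0: "lin e0 = smul a e0" using dec[OF lin_Zk[OF e0]] by (simp add: a_def)
  have linx: "lin y = smul (y 0 * a) e0" if "y \<in> Zk k" for y
  proof -
    have "lin y = lin (smul (y 0) e0)" using arg_cong[OF dec[OF that], of lin] .
    also have "\<dots> = smul (y 0) (smul a e0)" using lin_smul[OF e0] le0 by simp
    finally show ?thesis by (simp add: smul_def fun_eq_iff)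
  qed
  obtain y where y: "y \<in> Zk k" "lin y = e0" using lin_surj[OF e0] by blast
  have "lin y 0 = smul (y 0 * a) e0 0" using fun_cong[OF linx[OF y(1)], of 0] .
  then have "y 0 * a = 1" using y(2) by (simp add: smul_def e0_def)
  then have "a = 1 \<or> a = -1" using zmult_eq_1_iff by blast
  moreover have "a \<noteq> 1"
  proof
    assume "a = 1"
    then have "lin e0 = e0" using le0 by (simp add: smul_def)
    then have "e0 = 0" using K e0 by blast
    then have "e0 0 = 0" by simp
    then show False by (simp add: e0_def)
  qed
  ultimately have am: "a = -1" by blast
  have neg: "lin y = - y" if "y \<in> Zk k" for y
  proof (rule ext)
    fix i
    have "lin y i = y 0 * a * e0 i" using fun_cong[OF linx[OF that], of i] by (simp add: smul_def)
    moreover have "y i = y 0 * e0 i" using fun_cong[OF dec[OF that], of i] by (simp add: smul_def)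
    ultimately show "lin y i = (- y) i" using am by simp
  qed
  fix x assume x: "x \<in> Zk k"
  have 1: "A (A x) = lin (lin x + cc) + cc" by (simp add: A_def)
  have 2: "lin (lin x + cc) = lin (lin x) + lin cc" by (rule lin_add) (use lin_Zk x cc in auto)
  have 3: "lin (lin x) = x" using neg[OF lin_Zk[OF x]] neg[OF x] by simp
  have 4: "lin cc = - cc" using neg[OF cc(1)] .
  show "A (A x) = x" unfolding 1 2 3 4 by simp
qed

end

lemma card_red_ge1: assumes k: "1 \<le> k" and N: "N > 0"
  shows "N \<le> card (red (int N) ` Zk k)"
proof -
  define f where "f t = (\<lambda>i::nat. if i = 0 then int t else 0)" for t :: nat
  have sub: "f ` {0..<N} \<subseteq> red (int N) ` Zk k"
  proof
    fix z assume "z \<in> f ` {0..<N}"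
    then obtain t where t: "t < N" "z = f t" by auto
    have "f t \<in> Zk k" using k by (simp add: f_def Zk_iff)
    moreover have "red (int N) (f t) = f t" using t by (simp add: red_def f_def fun_eq_iff)
    ultimately show "z \<in> red (int N) ` Zk k" using t by (metis image_eqI)
  qed
  have inj: "inj_on f {0..<N}" by (rule inj_onI) (simp add: f_def fun_eq_iff, metis of_nat_eq_iff)
  have "card (f ` {0..<N}) \<le> card (red (int N) ` Zk k)"
    using sub red_finite[of "int N" k] N by (intro card_mono) auto
  then show ?thesis using card_image[OF inj] by simp
qed

lemma card_red_ge2: assumes k: "2 \<le> k" and N: "N > 0"
  shows "N * N \<le> card (red (int N) ` Zk k)"
proof -
  define f where "f ab = (\<lambda>i::nat. if i = 0 then int (fst ab) else if i = 1 then int (snd ab) else 0)" for ab :: "nat \<times> nat"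
  have sub: "f ` ({0..<N} \<times> {0..<N}) \<subseteq> red (int N) ` Zk k"
  proof
    fix z assume "z \<in> f ` ({0..<N} \<times> {0..<N})"
    then obtain ab where t: "fst ab < N" "snd ab < N" "z = f ab" by auto
    have "f ab \<in> Zk k" using k by (simp add: f_def Zk_iff)
    moreover have "red (int N) (f ab) = f ab" using t by (simp add: red_def f_def fun_eq_iff)
    ultimately show "z \<in> red (int N) ` Zk k" using t by (metis image_eqI)
  qed
  have inj: "inj_on f ({0..<N} \<times> {0..<N})"
  proof (rule inj_onI)
    fix ab cd assume "f ab = f cd"
    then have "f ab 0 = f cd 0" "f ab 1 = f cd 1" by auto
    then have "fst ab = fst cd" "snd ab = snd cd" by (auto simp: f_def)
    then show "ab = cd" by (simp add: prod_eq_iff)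
  qed
  have "card (f ` ({0..<N} \<times> {0..<N})) \<le> card (red (int N) ` Zk k)"
    using sub red_finite[of "int N" k] N by (intro card_mono) auto
  then show ?thesis using card_image[OF inj] by (simp add: card_cartesian_product)
qed

context wr_aut
begin

lemma pigeon4: "\<exists>s>0. \<forall>x\<in>Zk k. red 4 ((A ^^ s) x) = red 4 x"
proof -
  define H where "H = red 4 ` Zk k"
  have finH: "finite H" using red_finite[of 4 k] by (simp add: H_def)
  define g where "g n = restrict (\<lambda>y. red 4 ((A ^^ n) y)) H" for n
  have "range g \<subseteq> PiE H (\<lambda>_. H)"
  proof
    fix h assume "h \<in> range g"
    then obtain n where n: "h = g n" by blast
    have "red 4 ((A ^^ n) y) \<in> H" if "y \<in> H" for y
    proof -
      have "y \<in> Zk k" using that by (auto simp: H_def)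
      then show ?thesis using Apow_Zk by (auto simp: H_def)
    qed
    then show "h \<in> PiE H (\<lambda>_. H)" using n by (auto simp: g_def)
  qed
  moreover have "finite (PiE H (\<lambda>_. H))" using finH by (intro finite_PiE) auto
  ultimately have "finite (range g)" using finite_subset by blast
  then have "\<not> inj g" using range_inj_infinite by blast
  then obtain a0 b0 where ab0: "a0 \<noteq> b0" "g a0 = g b0" unfolding inj_def by blast
  have "\<exists>a b. a < b \<and> g a = g b"
  proof (cases "a0 < b0")
    case True then show ?thesis using ab0 by blast
  next
    case False
    then have "b0 < a0" using ab0(1) by simp
    then show ?thesis using ab0(2) by (intro exI[of _ b0] exI[of _ a0]) simp
  qed
  then obtain a b where ab: "a < b" "g a = g b" by blast
  have hab: "red 4 ((A ^^ a) y) = red 4 ((A ^^ b) y)" if y: "y \<in> Zk k" for y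
  proof -
    define y' where "y' = red 4 y"
    have y'H: "y' \<in> H" using y by (simp add: H_def y'_def)
    have y'Z: "y' \<in> Zk k" using y by (simp add: y'_def)
    have "g a y' = g b y'" using ab(2) by simp
    then have e1: "red 4 ((A ^^ a) y') = red 4 ((A ^^ b) y')" by (simp add: g_def y'H)
    have r: "red 4 y = red 4 y'" by (simp add: y'_def)
    have e2: "red 4 ((A ^^ a) y) = red 4 ((A ^^ a) y')" by (rule Apow_red[OF _ y y'Z r]) simp
    have e3: "red 4 ((A ^^ b) y) = red 4 ((A ^^ b) y')" by (rule Apow_red[OF _ y y'Z r]) simp
    show ?thesis by (simp only: e1 e2 e3)
  qed
  have "\<forall>x\<in>Zk k. red 4 ((A ^^ (b - a)) x) = red 4 x"
  proof
    fix x assume x: "x \<in> Zk k"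
    obtain w where w: "w \<in> Zk k" "(A ^^ a) w = x" using Apow_surj[OF x] by blast
    have "(A ^^ (b - a)) x = (A ^^ b) w" using funpow_split2[of a b A w] ab(1) w(2) by simp
    then show "red 4 ((A ^^ (b - a)) x) = red 4 x" using hab[OF w(1)] w(2) by simp
  qed
  then show ?thesis using ab(1) by (intro exI[of _ "b - a"]) simp
qed

lemma caseA:
  assumes K: "\<forall>z\<in>Zk k. lin z = z \<longrightarrow> z = 0" and k: "k \<ge> 1"
  shows "infinite (reidemeister_classes G \<phi>)"
proof
  assume fin: "finite (reidemeister_classes G \<phi>)"
  have finOR: "finite (Zk k // OR)" using classes_ge_orbits[OF K fin] by blast
  define c where "c = card (Zk k // OR)"
  show False
  proof (cases "k = 1")
    case True
    have P2: "\<forall>x\<in>Zk k. red p ((A ^^ 2) x) = red p x" for p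
      using k1_inv[OF K True] by (simp add: numeral_2_eq_2)
    define N where "N = 2 * c + 1"
    have "N \<le> card (red (int N) ` Zk k)" using card_red_ge1[of k N] k by (simp add: N_def)
    also have "\<dots> \<le> c * 2" unfolding c_def using orbit_count[of 2 "int N", OF _ _ P2 finOR] by (simp add: N_def)
    finally show False by (simp add: N_def)
  next
    case False
    then have k2: "k \<ge> 2" using k by simp
    obtain s where s: "s > 0" "\<forall>x\<in>Zk k. red 4 ((A ^^ s) x) = red 4 x" using pigeon4 by blast
    define T where "T = A ^^ s"
    have affT: "aff k (T ^^ n)" for n unfolding T_def by (intro aff_pow aff_Apow)
    have Tj: "\<forall>x\<in>Zk k. red (2 ^ (j + 2)) ((T ^^ (2 ^ j)) x) = red (2 ^ (j + 2)) x" for j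
    proof (induction j)
      case 0
      then show ?case using s(2) by (simp add: T_def)
    next
      case (Suc j)
      have "\<forall>x\<in>Zk k. red (2 * 2 ^ (j + 2)) ((T ^^ (2 ^ j)) ((T ^^ (2 ^ j)) x)) = red (2 * 2 ^ (j + 2)) x"
        by (rule aff_double[OF affT _ _ Suc]) auto
      moreover have "T ^^ (2 ^ Suc j) = (T ^^ (2 ^ j)) \<circ> (T ^^ (2 ^ j))"
        by (simp add: funpow_add[symmetric] mult_2)
      ultimately show ?case by (simp add: algebra_simps)
    qed
    define j where "j = c * s"
    define N :: nat where "N = 2 ^ (j + 2)"
    define P where "P = s * 2 ^ j"
    have AP: "A ^^ P = T ^^ (2 ^ j)" by (simp add: T_def P_def funpow_mult)
    have redP: "\<forall>x\<in>Zk k. red (int N) ((A ^^ P) x) = red (int N) x"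
      using Tj[of j] unfolding AP N_def by simp
    have "N * N \<le> card (red (int N) ` Zk k)" using card_red_ge2[OF k2, of N] by (simp add: N_def)
    also have "\<dots> \<le> c * P" unfolding c_def
      using orbit_count[of P "int N", OF _ _ redP finOR] s(1) by (simp add: P_def N_def)
    finally have le: "N * N \<le> c * P" .
    have "j < 2 ^ j" by (rule less_exp)
    also have "\<dots> \<le> 2 ^ (j + 4)" by (rule power_increasing) auto
    finally have "j * 2 ^ j < 2 ^ (j + 4) * 2 ^ j" by simp
    also have "2 ^ (j + 4) * 2 ^ j = N * N"
    proof -
      have "N * N = (2::nat) ^ ((j + 2) + (j + 2))" unfolding N_def by (rule power_add[symmetric])
      also have "(j + 2) + (j + 2) = (j + 4) + j" by simp
      also have "(2::nat) ^ ((j + 4) + j) = 2 ^ (j + 4) * 2 ^ j" by (rule power_add)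
      finally show ?thesis by simp
    qed
    finally have "c * P < N * N" by (simp add: j_def P_def algebra_simps)
    then show False using le by simp
  qed
qed

end

theorem theorem2p3:
  fixes k :: nat
  assumes "k \<ge> 1"
  shows "R_infinity (Z2_wr_Zk k)"
  unfolding R_infinity_def
proof
  fix \<phi> assume iso: "\<phi> \<in> iso (Z2_wr_Zk k) (Z2_wr_Zk k)"
  interpret wr_aut k \<phi> by unfold_locales (rule iso)
  show "infinite (reidemeister_classes (Z2_wr_Zk k) \<phi>)"
  proof (cases "\<exists>z0\<in>Zk k. z0 \<noteq> 0 \<and> lin z0 = z0")
    case True
    then obtain z0 where "z0 \<in> Zk k" "z0 \<noteq> 0" "lin z0 = z0" by blast
    then show ?thesis by (rule caseB)
  next
    case False
    then have "\<forall>z\<in>Zk k. lin z = z \<longrightarrow> z = 0" by blast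
    then show ?thesis using caseA assms by blast
  qed
qed


end
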